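(* Let $k$ be an algebraically closed field and $R=k[x_0,x_1,x_2]$. Let $r\geq 2$ and let $d_1\geq d_2\geq\cdots\geq d_r\geq 1$ be integers, $d=d_1+\cdots+d_r$, $D=\sum_{1\leq i<j\leq r}d_id_j$. Let $F=F_1\cdots F_r$ be a general product of forms $F_i\in R_{d_i}$, and let $I_F\subset R$ be the ideal generated by $F/F_1,\dots,F/F_r$. Then the Hilbert function of $R/I_F$ satisfies: (i) $H(R/I_F,j)=D$ for all $j\geq d-2$; (ii) for $j\leq d-1$, $$H(R/I_F,j)=\binom{j+2}{2}-\sum_{i=1}^r\binom{\max\{j-d+d_i,\,-1\}+2}{2}.$$
   Context: Here "general" means $[F]$ is a general point of the variety $\mathbb{X}_{2,\lambda}\subset\mathbb{P}(R_d)$ of forms of degree $d$ that factor as a product of forms of degrees $d_1,\dots,d_r$. $H(R/I_F,j)=\dim_k (R/I_F)_j$. *)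

theory Defs
  imports Main "HOL-Computational_Algebra.Polynomial" "HOL-Library.Poly_Mapping" "HOL-Library.Function_Algebras"
begin

text \<open>Polynomials in R = k[x0,x1,x2] are represented by their coefficient
functions on exponent triples (a,b,c) (the monomial x0^a x1^b x2^c);
genuine polynomials are the finitely supported ones.\<close>

type_synonym mon = "nat \<times> nat \<times> nat"
type_synonym 'a pol3 = "mon \<Rightarrow> 'a"

definition mdeg :: "mon \<Rightarrow> nat" where
  "mdeg m = (case m of (a, b, c) \<Rightarrow> a + b + c)"

definition below :: "mon \<Rightarrow> mon set" where
  "below m = (case m of (a, b, c) \<Rightarrow> {0..a} \<times> {0..b} \<times> {0..c})"

definition msub :: "mon \<Rightarrow> mon \<Rightarrow> mon" where
  "msub m p = (case m of (a, b, c) \<Rightarrow> case p of (a', b', c') \<Rightarrow> (a - a', b - b', c - c'))"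

definition is_poly :: "'a::zero pol3 \<Rightarrow> bool" where
  "is_poly f \<longleftrightarrow> finite {m. f m \<noteq> 0}"

definition pmul :: "'a::comm_ring_1 pol3 \<Rightarrow> 'a pol3 \<Rightarrow> 'a pol3" where
  "pmul f g = (\<lambda>m. \<Sum>p\<in>below m. f p * g (msub m p))"

definition pone :: "'a::comm_ring_1 pol3" where
  "pone = (\<lambda>m. if m = (0, 0, 0) then 1 else 0)"

fun pprod :: "'a::comm_ring_1 pol3 list \<Rightarrow> 'a pol3" where
  "pprod [] = pone"
| "pprod (f # fs) = pmul f (pprod fs)"

definition form_of :: "nat \<Rightarrow> (mon \<Rightarrow> 'a::zero) \<Rightarrow> 'a pol3" where
  "form_of e c = (\<lambda>m. if mdeg m = e then c m else 0)"

text \<open>F / F_i = product of the F_l, l \<noteq> i (factors indexed 0..r-1).\<close>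
definition cofactor :: "nat \<Rightarrow> (nat \<Rightarrow> 'a::comm_ring_1 pol3) \<Rightarrow> nat \<Rightarrow> 'a pol3" where
  "cofactor r Fs i = pprod (map Fs (filter (\<lambda>l. l \<noteq> i) [0..<r]))"

definition gen_ideal :: "nat \<Rightarrow> (nat \<Rightarrow> 'a::comm_ring_1 pol3) \<Rightarrow> 'a pol3 set" where
  "gen_ideal r G = {f. \<exists>h. (\<forall>i<r. is_poly (h i)) \<and> f = (\<lambda>m. \<Sum>i<r. pmul (h i) (G i) m)}"

definition deg_part :: "'a::zero pol3 set \<Rightarrow> nat \<Rightarrow> 'a pol3 set" where
  "deg_part I j = {f \<in> I. \<forall>m. f m \<noteq> 0 \<longrightarrow> mdeg m = j}"

definition fscale :: "'a::field \<Rightarrow> 'a pol3 \<Rightarrow> 'a pol3" where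
  "fscale a f = (\<lambda>m. a * f m)"

definition hilbert_quot :: "'a::field pol3 set \<Rightarrow> nat \<Rightarrow> nat" where
  "hilbert_quot I j = card {m. mdeg m = j} - vector_space.dim fscale (deg_part I j)"

definition I_F :: "nat \<Rightarrow> (nat \<Rightarrow> 'a::comm_ring_1 pol3) \<Rightarrow> 'a pol3 set" where
  "I_F r Fs = gen_ideal r (cofactor r Fs)"

type_synonym ('v, 'a) mpoly = "('v \<Rightarrow>\<^sub>0 nat) \<Rightarrow>\<^sub>0 'a"

definition mpeval :: "('v, 'a::comm_ring_1) mpoly \<Rightarrow> ('v \<Rightarrow> 'a) \<Rightarrow> 'a" where
  "mpeval G x = (\<Sum>e\<in>Poly_Mapping.keys G. Poly_Mapping.lookup G e * (\<Prod>v\<in>Poly_Mapping.keys (e :: 'v \<Rightarrow>\<^sub>0 nat). x v ^ Poly_Mapping.lookup e v))"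

text \<open>A property P of r-tuples of forms of degrees ds 0, ..., ds (r-1)
(given by a coefficient vector c, variable (i,m) = coefficient of monomial m in F_i)
holds for a general tuple: it holds on a nonempty Zariski-open subset of the parameter
space, i.e. outside the zero locus of some nonzero polynomial in the coefficients.\<close>
definition general_holds :: "nat \<Rightarrow> (nat \<Rightarrow> nat) \<Rightarrow> ((nat \<times> mon \<Rightarrow> 'a::comm_ring_1) \<Rightarrow> bool) \<Rightarrow> bool" where
  "general_holds r ds P \<longleftrightarrow>
     (\<exists>G :: (nat \<times> mon, 'a) mpoly. G \<noteq> 0 \<and>
        (\<forall>mon_e\<in>Poly_Mapping.keys G. \<forall>v\<in>Poly_Mapping.keys mon_e. fst v < r \<and> mdeg (snd v) = ds (fst v)) \<and>
        (\<forall>c. mpeval G c \<noteq> 0 \<longrightarrow> P c))"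

definition forms_of :: "(nat \<Rightarrow> nat) \<Rightarrow> (nat \<times> mon \<Rightarrow> 'a::zero) \<Rightarrow> nat \<Rightarrow> 'a pol3" where
  "forms_of ds c i = form_of (ds i) (\<lambda>m. c (i, m))"

end

theory Submission
  imports Defs "HOL-Computational_Algebra.Formal_Power_Series" "Jordan_Normal_Form.Determinant"
begin


definition phom :: "'a::zero pol3 \<Rightarrow> nat \<Rightarrow> bool" where
  "phom f e \<longleftrightarrow> (\<forall>m. f m \<noteq> 0 \<longrightarrow> mdeg m = e)"

definition Psi :: "'a::comm_ring_1 pol3 \<Rightarrow> 'a fps fps fps" where
  "Psi f = Abs_fps (\<lambda>a. Abs_fps (\<lambda>b. Abs_fps (\<lambda>c. f (a,b,c))))"

lemma Psi_nth: "fps_nth (fps_nth (fps_nth (Psi f) a) b) c = f (a,b,c)"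
  by (simp add: Psi_def)

lemma Psi_inj: assumes "Psi f = Psi g" shows "f = g"
proof
  fix m :: mon obtain a b c where m: "m = (a,b,c)" by (cases m) auto
  have "fps_nth (fps_nth (fps_nth (Psi f) a) b) c = fps_nth (fps_nth (fps_nth (Psi g) a) b) c"
    using assms by simp
  then show "f m = g m" by (simp add: Psi_nth m)
qed

lemma Psi_pmul: "Psi (pmul f g) = Psi f * Psi g"
proof (rule fps_ext)+
  fix a b c
  have "fps_nth (fps_nth (fps_nth (Psi f * Psi g) a) b) c
     = (\<Sum>i=0..a. \<Sum>k=0..b. \<Sum>l=0..c. f (i,k,l) * g (a-i,b-k,c-l))"
    by (simp add: fps_mult_nth fps_sum_nth Psi_nth)
  also have "\<dots> = (\<Sum>p\<in>{0..a}\<times>{0..b}\<times>{0..c}. f p * g (msub (a,b,c) p))"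
    by (simp add: sum.cartesian_product msub_def case_prod_beta)
  also have "\<dots> = pmul f g (a,b,c)" by (simp add: pmul_def below_def)
  finally show "fps_nth (fps_nth (fps_nth (Psi (pmul f g)) a) b) c = fps_nth (fps_nth (fps_nth (Psi f * Psi g) a) b) c"
    by (simp add: Psi_nth)
qed

lemma Psi_add: "Psi (f + g) = Psi f + Psi g"
  by (rule fps_ext)+ (simp add: Psi_nth)
lemma Psi_diff: "Psi (f - g) = Psi f - Psi g"
  by (rule fps_ext)+ (simp add: Psi_nth)
lemma Psi_uminus: "Psi (- f) = - Psi f"
  by (rule fps_ext)+ (simp add: Psi_nth)
lemma Psi_zero: "Psi 0 = 0"
  by (rule fps_ext)+ (simp add: Psi_nth)
lemma Psi_one: "Psi pone = 1"
  by (rule fps_ext)+ (simp add: Psi_nth pone_def fps_one_nth)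

lemma Psi_eq_iff: "Psi f = Psi g \<longleftrightarrow> f = g"
  using Psi_inj by metis

lemma pmul_comm: "pmul f g = pmul g f"
  by (rule Psi_inj) (simp add: Psi_pmul mult.commute)
lemma pmul_assoc: "pmul (pmul f g) h = pmul f (pmul g h)"
  by (rule Psi_inj) (simp add: Psi_pmul mult.assoc)
lemma pmul_add_left: "pmul (f + g) h = pmul f h + pmul g h"
  by (rule Psi_inj) (simp add: Psi_pmul Psi_add algebra_simps)
lemma pmul_add_right: "pmul h (f + g) = pmul h f + pmul h g"
  by (rule Psi_inj) (simp add: Psi_pmul Psi_add algebra_simps)
lemma pmul_diff_left: "pmul (f - g) h = pmul f h - pmul g h"
  by (rule Psi_inj) (simp add: Psi_pmul Psi_diff algebra_simps)
lemma pmul_diff_right: "pmul h (f - g) = pmul h f - pmul h g"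
  by (rule Psi_inj) (simp add: Psi_pmul Psi_diff algebra_simps)
lemma pmul_zero_left[simp]: "pmul 0 f = 0"
  by (rule Psi_inj) (simp add: Psi_pmul Psi_zero)
lemma pmul_zero_right[simp]: "pmul f 0 = 0"
  by (rule Psi_inj) (simp add: Psi_pmul Psi_zero)
lemma pmul_one_left[simp]: "pmul pone f = f"
  by (rule Psi_inj) (simp add: Psi_pmul Psi_one)

lemma pmul_idom:
  fixes f g :: "'a::idom pol3"
  assumes "pmul f g = 0" "f \<noteq> 0" shows "g = 0"
proof -
  have "Psi f * Psi g = 0" using assms(1) by (metis Psi_pmul Psi_zero)
  moreover have "Psi f \<noteq> 0" using assms(2) Psi_zero Psi_inj by metis
  ultimately have "Psi g = 0" by simp
  then show ?thesis using Psi_zero Psi_inj by metis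
qed

lemma pmul_cancel:
  fixes f g h :: "'a::idom pol3"
  assumes "pmul f g = pmul f h" "f \<noteq> 0" shows "g = h"
  using pmul_idom[of f "g - h"] assms by (simp add: pmul_diff_right)

lemma Psi_sum: "Psi (\<Sum>i\<in>S. f i) = (\<Sum>i\<in>S. Psi (f i))"
proof (induction S rule: infinite_finite_induct)
  case (infinite A) then show ?case by (metis Psi_zero sum.infinite)
next
  case empty then show ?case by (metis Psi_zero sum.empty)
next
  case (insert x F) then show ?case by (metis Psi_add sum.insert)
qed

lemma Psi_pprod: "Psi (pprod fs) = prod_list (map Psi fs)"
  by (induction fs) (auto simp: Psi_pmul Psi_one)

lemma pmul_sum_left: "pmul (\<Sum>i\<in>S. f i) h = (\<Sum>i\<in>S. pmul (f i) h)"
  by (rule Psi_inj) (simp add: Psi_pmul Psi_sum sum_distrib_right)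
lemma pmul_sum_right: "pmul h (\<Sum>i\<in>S. f i) = (\<Sum>i\<in>S. pmul h (f i))"
  by (rule Psi_inj) (simp add: Psi_pmul Psi_sum sum_distrib_left)


lemma below_iff: "p \<in> below m \<longleftrightarrow> fst p \<le> fst m \<and> fst (snd p) \<le> fst (snd m) \<and> snd (snd p) \<le> snd (snd m)"
  by (cases p; cases m) (auto simp: below_def)

lemma finite_below[simp]: "finite (below m)"
  by (cases m) (simp add: below_def)

lemma mdeg_msub: "p \<in> below m \<Longrightarrow> mdeg m = mdeg p + mdeg (msub m p)"
  by (cases p; cases m) (auto simp: below_def mdeg_def msub_def)

lemma phomD: assumes "phom f k" "f m \<noteq> 0" shows "mdeg m = k" using assms unfolding phom_def by blast

lemma phom_pmul: assumes "phom f p" "phom g q" shows "phom (pmul f g) (p+q)"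
  unfolding phom_def
proof (intro allI impI)
  fix m assume "pmul f g m \<noteq> 0"
  then obtain p' where p': "p' \<in> below m" "f p' * g (msub m p') \<noteq> 0"
    unfolding pmul_def by (meson sum.not_neutral_contains_not_neutral)
  then have "mdeg p' = p" "mdeg (msub m p') = q" using assms phomD by (metis mult_zero_left mult_zero_right)+
  then show "mdeg m = p + q" using mdeg_msub[OF p'(1)] by simp
qed

definition pcomp :: "nat \<Rightarrow> 'a::zero pol3 \<Rightarrow> 'a pol3" where
  "pcomp k f = (\<lambda>m. if mdeg m = k then f m else 0)"


lemma phom_comp: "phom (pcomp k f) k" by (simp add: phom_def pcomp_def)
lemma pcomp_hom: "phom f k \<Longrightarrow> pcomp k f = f" by (auto simp: phom_def pcomp_def fun_eq_iff)
lemma pcomp_add: "pcomp k ((f::'a::comm_ring_1 pol3) + g) = pcomp k f + pcomp k g" by (auto simp: pcomp_def fun_eq_iff)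
lemma pcomp_diff: "pcomp k ((f::'a::comm_ring_1 pol3) - g) = pcomp k f - pcomp k g" by (auto simp: pcomp_def fun_eq_iff)
lemma pcomp_zero[simp]: "pcomp k (0::'a::comm_ring_1 pol3) = 0" by (auto simp: pcomp_def fun_eq_iff)
lemma pcomp_sum: "pcomp k (\<Sum>i\<in>S. (f i::'a::comm_ring_1 pol3)) = (\<Sum>i\<in>S. pcomp k (f i))"
proof (induction S rule: infinite_finite_induct)
  case (infinite A) then show ?case by (metis pcomp_zero sum.infinite)
next
  case empty then show ?case by (metis pcomp_zero sum.empty)
next
  case (insert x F) then show ?case by (metis pcomp_add sum.insert)
qed
lemma phom_zero[simp]: "phom (0::'a::comm_ring_1 pol3) k" by (simp add: phom_def)
lemma phom_add: "phom f k \<Longrightarrow> phom g k \<Longrightarrow> phom ((f::'a::comm_ring_1 pol3) + g) k" by (simp add: phom_def) (metis add.left_neutral)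
lemma phom_diff: "phom f k \<Longrightarrow> phom (g::'a::comm_ring_1 pol3) k \<Longrightarrow> phom (f - g) k" by (simp add: phom_def) (metis diff_self diff_zero)
lemma phom_uminus: "phom (f::'a::comm_ring_1 pol3) k \<Longrightarrow> phom (- f) k" by (auto simp: phom_def)
lemma phom_sum: "(\<And>i. i \<in> S \<Longrightarrow> phom (f i) k) \<Longrightarrow> phom (\<Sum>i\<in>S. (f i::'a::comm_ring_1 pol3)) k"
proof (induction S rule: infinite_finite_induct)
  case (infinite A) then show ?case by (metis phom_zero sum.infinite)
next
  case empty then show ?case by (metis phom_zero sum.empty)
next
  case (insert x F) then show ?case by (metis phom_add sum.insert insertCI)
qed

lemma pcomp_pmul:
  assumes "phom a p"
  shows "pcomp k (pmul a g) = (if p \<le> k then pmul a (pcomp (k - p) g) else 0)"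
proof (rule ext)
  fix m
  show "pcomp k (pmul a g) m = (if p \<le> k then pmul a (pcomp (k - p) g) else 0) m"
  proof (cases "mdeg m = k")
    case True
    show ?thesis
    proof (cases "p \<le> k")
      case True2: True
      have "pmul a g m = pmul a (pcomp (k - p) g) m"
        unfolding pmul_def
      proof (rule sum.cong[OF refl])
        fix p' assume p': "p' \<in> below m"
        show "a p' * g (msub m p') = a p' * pcomp (k - p) g (msub m p')"
        proof (cases "a p' = 0")
          case False
          then have "mdeg p' = p" using assms phomD by metis
          then have "mdeg (msub m p') = k - p" using mdeg_msub[OF p'] True by simp
          then show ?thesis by (simp add: pcomp_def)
        qed simp
      qed
      then show ?thesis using True True2 by (simp add: pcomp_def)
    next
      case False
      have "pmul a g m = 0"
        unfolding pmul_def
      proof (rule sum.neutral, rule ballI)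
        fix p' assume p': "p' \<in> below m"
        show "a p' * g (msub m p') = 0"
        proof (cases "a p' = 0")
          case False2: False
          then have "mdeg p' = p" using assms phomD by metis
          then show ?thesis using mdeg_msub[OF p'] True False by simp
        qed simp
      qed
      then show ?thesis using True False by (simp add: pcomp_def)
    qed
  next
    case False
    have "p \<le> k \<Longrightarrow> pmul a (pcomp (k - p) g) m = 0"
      unfolding pmul_def
    proof (rule sum.neutral, rule ballI)
      fix p' assume pk: "p \<le> k" and p': "p' \<in> below m"
      show "a p' * pcomp (k - p) g (msub m p') = 0"
      proof (cases "a p' = 0")
        case False2: False
        then have "mdeg p' = p" using assms phomD by metis
        then show ?thesis using mdeg_msub[OF p'] False pk by (auto simp: pcomp_def)
      qed simp
    qed
    then show ?thesis using False by (simp add: pcomp_def)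
  qed
qed

lemma pcomp_pmul': "phom a p \<Longrightarrow> p \<le> k \<Longrightarrow> pcomp k (pmul a g) = pmul a (pcomp (k - p) g)"
  using pcomp_pmul[of a p k g] by simp

lemma pcomp_pmul_small: "phom a p \<Longrightarrow> k < p \<Longrightarrow> pcomp k (pmul a g) = 0"
  using pcomp_pmul[of a p k g] by auto

definition pres :: "'a::comm_ring_1 pol3 \<Rightarrow> 'a pol3" where
  "pres f = (\<lambda>(a,b,c). if a = 0 then f (a,b,c) else 0)"
definition shx :: "'a::comm_ring_1 pol3 \<Rightarrow> 'a pol3" where
  "shx f = (\<lambda>(a,b,c). if a = 0 then 0 else f (a-1,b,c))"
definition unsh :: "'a::comm_ring_1 pol3 \<Rightarrow> 'a pol3" where
  "unsh f = (\<lambda>(a,b,c). f (Suc a,b,c))"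

lemma Psi_res: "Psi (pres f) = fps_const (fps_nth (Psi f) 0)"
  by (rule fps_ext)+ (simp add: Psi_nth pres_def)

lemma Psi_shx: "Psi (shx f) = fps_X * Psi f"
  by (rule fps_ext)+ (auto simp: Psi_nth shx_def fps_X_mult_nth)

lemma pres_pmul: "pres (pmul f g) = pmul (pres f) (pres g)"
  by (rule Psi_inj) (simp add: Psi_res Psi_pmul fps_mult_nth)

lemma shx_pmul: "pmul (shx f) g = shx (pmul f g)"
  by (rule Psi_inj) (simp add: Psi_shx Psi_pmul mult.assoc)

lemma shx_pmul_right: "pmul g (shx f) = shx (pmul g f)"
  using shx_pmul pmul_comm by metis

lemma shx_inj: assumes "shx f = shx g" shows "f = g"
proof
  fix m :: mon obtain a b c where m: "m = (a,b,c)" by (cases m) auto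
  have "shx f (Suc a, b, c) = shx g (Suc a, b, c)" using assms by simp
  then show "f m = g m" by (simp add: shx_def m)
qed

lemma pres_shx: "f = pres f + shx (unsh f)"
  by (auto simp: pres_def shx_def unsh_def fun_eq_iff)

lemma pres_add: "pres (f + g) = pres f + pres g" by (auto simp: pres_def fun_eq_iff)
lemma pres_diff: "pres (f - g) = pres f - pres (g::'a::comm_ring_1 pol3)" by (auto simp: pres_def fun_eq_iff)
lemma pres_res[simp]: "pres (pres f) = pres f" by (auto simp: pres_def fun_eq_iff)
lemma pres_zero[simp]: "pres 0 = 0" by (auto simp: pres_def fun_eq_iff)

lemma phom_res: "phom f k \<Longrightarrow> phom (pres f) k" by (auto simp: phom_def pres_def)

lemma phom_unsh: assumes "phom f (Suc k)" shows "phom (unsh f) k"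
  unfolding phom_def
proof (intro allI impI)
  fix m :: mon assume "unsh f m \<noteq> 0"
  obtain a b c where m: "m = (a,b,c)" by (cases m) auto
  have "f (Suc a, b, c) \<noteq> 0" using \<open>unsh f m \<noteq> 0\<close> by (simp add: unsh_def m)
  from phomD[OF assms this] show "mdeg m = k" by (simp add: mdeg_def m)
qed

lemma hom0_res0: assumes "phom f 0" "pres f = 0" shows "f = 0"
proof
  fix m :: mon obtain a b c where m: "m = (a,b,c)" by (cases m) auto
  show "f m = 0 m"
  proof (cases "a = 0")
    case True then show ?thesis using fun_cong[OF assms(2), of m] m by (simp add: pres_def)
  next
    case False then show ?thesis using assms(1) m by (auto simp: phom_def mdeg_def)
  qed
qed

lemma res0_shx: "pres f = 0 \<Longrightarrow> f = shx (unsh f)"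
  using pres_shx[of f] by simp


definition dh :: "nat \<Rightarrow> 'a::comm_ring_1 pol3 \<Rightarrow> 'a poly" where
  "dh n f = (\<Sum>k\<le>n. monom (f (0, n-k, k)) k)"

lemma coeff_dh: "coeff (dh n f) k = (if k \<le> n then f (0, n-k, k) else 0)"
  by (simp add: dh_def coeff_sum coeff_monom)

lemma degree_dh: "degree (dh n f) \<le> n"
  by (rule degree_le) (simp add: coeff_dh)

lemma phom_bin: assumes "phom f p" shows "f (0, b, c) = (if b = p - c \<and> c \<le> p then f (0, p - c, c) else 0)"
proof (cases "f (0,b,c) = 0")
  case False
  then have "mdeg (0,b,c) = p" using phomD[OF assms] by blast
  then show ?thesis by (auto simp: mdeg_def)
qed auto

lemma dh_pmul:
  fixes f g :: "'a::comm_ring_1 pol3"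
  assumes f: "phom f p" and g: "phom g q"
  shows "dh (p+q) (pmul f g) = dh p f * dh q g"
proof (rule poly_eqI)
  fix k
  show "coeff (dh (p+q) (pmul f g)) k = coeff (dh p f * dh q g) k"
  proof (cases "k \<le> p + q")
    case True
    define B where "B = p + q - k"
    have "coeff (dh (p+q) (pmul f g)) k = pmul f g (0, B, k)"
      using True by (simp add: coeff_dh B_def)
    also have "\<dots> = (\<Sum>y\<in>{0..B}\<times>{0..k}. f (0,y) * g (msub (0,B,k) (0,y)))"
    proof -
      have "{0::nat} \<times> ({0..B}\<times>{0..k}) = Pair 0 ` ({0..B}\<times>{0..k})" by auto
      then show ?thesis unfolding pmul_def below_def
        by (simp add: sum.reindex inj_on_def)
    qed
    also have "\<dots> = (\<Sum>y\<in>{0..B}\<times>{0..k}. f (0,y) * g (0, B - fst y, k - snd y))"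
      by (simp add: msub_def case_prod_beta)
    also have "\<dots> = (\<Sum>b'\<in>{0..B}. \<Sum>c'\<in>{0..k}. f (0,b',c') * g (0, B-b', k-c'))"
      by (simp add: sum.cartesian_product case_prod_beta)
    also have "\<dots> = (\<Sum>c'\<in>{0..k}. \<Sum>b'\<in>{0..B}. f (0,b',c') * g (0, B-b', k-c'))"
      by (rule sum.swap)
    also have "\<dots> = (\<Sum>c'\<in>{0..k}. coeff (dh p f) c' * coeff (dh q g) (k - c'))"
    proof (rule sum.cong[OF refl])
      fix c' assume c': "c' \<in> {0..k}"
      have "(\<Sum>b'\<in>{0..B}. f (0,b',c') * g (0, B-b', k-c'))
          = (\<Sum>b'\<in>{0..B}. if b' = p - c' then (if c' \<le> p then f (0, p - c', c') else 0) * g (0, B-b', k-c') else 0)"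
        by (rule sum.cong[OF refl]) (subst phom_bin[OF f], auto)
      also have "\<dots> = (if p - c' \<in> {0..B} then (if c' \<le> p then f (0, p - c', c') else 0) * g (0, B-(p-c'), k-c') else 0)"
        by (rule sum.delta) simp
      also have "\<dots> = coeff (dh p f) c' * coeff (dh q g) (k - c')"
      proof (cases "c' \<le> p")
        case True2: True
        show ?thesis
        proof (cases "k - c' \<le> q")
          case True3: True
          then have "p - c' \<in> {0..B}" "B - (p - c') = q - (k - c')" using True True2 c' by (auto simp: B_def)
          then show ?thesis using True2 True3 by (simp add: coeff_dh)
        next
          case False
          then have "p - c' \<notin> {0..B}" using True True2 c' by (auto simp: B_def)
          then show ?thesis using False by (simp add: coeff_dh)
        qed
      next
        case False then show ?thesis by (simp add: coeff_dh)
      qed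
      finally show "(\<Sum>b'\<in>{0..B}. f (0,b',c') * g (0, B-b', k-c')) = coeff (dh p f) c' * coeff (dh q g) (k - c')" .
    qed
    also have "\<dots> = coeff (dh p f * dh q g) k"
      by (simp add: coeff_mult atMost_atLeast0)
    finally show ?thesis .
  next
    case False
    have "degree (dh p f * dh q g) \<le> p + q"
      by (rule order.trans[OF degree_mult_le]) (use degree_dh[of p f] degree_dh[of q g] in simp)
    then have "coeff (dh p f * dh q g) k = 0" using False by (simp add: coeff_eq_0)
    then show ?thesis using False by (simp add: coeff_dh)
  qed
qed

definition isbin :: "'a::comm_ring_1 pol3 \<Rightarrow> bool" where
  "isbin f \<longleftrightarrow> pres f = f"

lemma isbin_res[simp]: "isbin (pres f)" by (simp add: isbin_def)

lemma dh_inj: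
  assumes "phom f n" "phom g n" "isbin f" "isbin g" "dh n f = dh n g"
  shows "f = g"
proof
  fix m :: mon obtain a b c where m: "m = (a,b,c)" by (cases m) auto
  show "f m = g m"
  proof (cases "a = 0")
    case False
    have "f m = pres f m" "g m = pres g m" using assms(3,4) by (auto simp: isbin_def)
    then show ?thesis using False m by (simp add: pres_def)
  next
    case True
    have "coeff (dh n f) c = coeff (dh n g) c" using assms(5) by simp
    then have "c \<le> n \<Longrightarrow> f (0, n-c, c) = g (0, n-c, c)" by (simp add: coeff_dh)
    then show ?thesis using True m phom_bin[OF assms(1), of b c] phom_bin[OF assms(2), of b c] by auto
  qed
qed

definition rh :: "nat \<Rightarrow> 'a::comm_ring_1 poly \<Rightarrow> 'a pol3" where
  "rh n e = (\<lambda>(a,b,c). if a = 0 \<and> b + c = n then coeff e c else 0)"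

lemma phom_rh: "phom (rh n e) n"
  by (auto simp: phom_def rh_def mdeg_def split: if_splits)

lemma isbin_rh: "isbin (rh n e)"
  by (auto simp: isbin_def rh_def pres_def fun_eq_iff)

lemma dh_rh: assumes "degree e \<le> n" shows "dh n (rh n e) = e"
proof (rule poly_eqI)
  fix k show "coeff (dh n (rh n e)) k = coeff e k"
    using assms by (auto simp: coeff_dh rh_def coeff_eq_0)
qed

lemma isbin_pmul: "isbin f \<Longrightarrow> isbin g \<Longrightarrow> isbin (pmul f g)"
  by (simp add: isbin_def pres_pmul)

lemma coeff_dh_top: "coeff (dh n f) n = f (0,0,n)"
  by (simp add: coeff_dh)

lemma Cop2:
  fixes a b c q0 :: "'a::field pol3"
  assumes a: "phom a p" "isbin a" and b: "phom b q" "isbin b"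
    and lead: "a (0,0,p) \<noteq> 0"
    and bez: "u * dh p a + v * dh q b = 1"
    and c: "phom c n" "isbin c" and q0: "phom q0 (n + q - p)" "isbin q0" and nqp: "p \<le> n + q"
    and eq: "pmul a q0 = pmul c b"
  shows "\<exists>e. phom e (n - p) \<and> isbin e \<and> c = pmul a e \<and> (p \<le> n \<or> e = 0)"
proof -
  let ?a = "dh p a" and ?b = "dh q b" and ?c = "dh n c" and ?q = "dh (n+q-p) q0"
  have "dh (p + (n+q-p)) (pmul a q0) = dh (n + q) (pmul c b)" using eq nqp by simp
  then have eq2: "?a * ?q = ?c * ?b" using dh_pmul[OF a(1) q0(1)] dh_pmul[OF c(1) b(1)] by simp
  define e' where "e' = ?c * u + ?q * v"
  have ce: "?c = ?a * e'"
  proof -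
    have "?c = ?c * (u * ?a + v * ?b)" using bez by simp
    also have "\<dots> = ?a * (?c * u) + v * (?c * ?b)" by (simp add: algebra_simps)
    also have "\<dots> = ?a * e'" unfolding e'_def eq2[symmetric] by (simp add: algebra_simps)
    finally show ?thesis .
  qed
  have dega: "degree ?a = p"
    using degree_dh[of p a] lead by (metis coeff_dh_top le_antisym le_degree)
  have a0: "?a \<noteq> 0" using lead by (metis coeff_dh_top coeff_0)
  show ?thesis
  proof (cases "?c = 0")
    case True
    have "c = 0" by (rule dh_inj[OF c(1) phom_zero c(2)]) (use True in \<open>auto simp: isbin_def dh_def\<close>)
    then show ?thesis by (intro exI[of _ 0]) (simp add: isbin_def)
  next
    case False
    then have e0: "e' \<noteq> 0" using ce by auto
    have "degree ?c = p + degree e'" using ce dega a0 e0 by (simp add: degree_mult_eq)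
    moreover have "degree ?c \<le> n" by (rule degree_dh)
    ultimately have pn: "p \<le> n" and de: "degree e' \<le> n - p" by auto
    define e where "e = rh (n - p) e'"
    have he: "phom e (n-p)" "isbin e" unfolding e_def by (rule phom_rh, rule isbin_rh)
    have "phom (pmul a e) n" using phom_pmul[OF a(1) he(1)] pn by simp
    moreover have "dh n (pmul a e) = dh n c"
      using dh_pmul[OF a(1) he(1)] pn ce dh_rh[OF de] by (simp add: e_def)
    ultimately have "pmul a e = c" using dh_inj c isbin_pmul[OF a(2) he(2)] by metis
    then show ?thesis using he pn by blast
  qed
qed


lemma pres_nz: "f (0,b,c) \<noteq> 0 \<Longrightarrow> pres f \<noteq> 0"
  by (auto simp: pres_def fun_eq_iff)

lemma lift_step:
  fixes A B C Q :: "'a::field pol3"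
  assumes A: "phom A p" and B: "phom B q" and lead: "A (0,0,p) \<noteq> 0" and B0: "B \<noteq> 0"
    and bez: "u * dh p (pres A) + v * dh q (pres B) = 1"
    and C: "phom C n" and eq: "pmul A Q = pmul C B"
  shows "\<exists>e0 C1. C = C1 + pmul A e0 \<and> phom C1 n \<and> pres C1 = 0 \<and>
          (\<exists>Q1. pmul A Q1 = pmul C1 B \<and> pres Q1 = 0)"
proof (cases "p \<le> n + q")
  case False
  have "pcomp (n+q) (pmul A Q) = 0" using pcomp_pmul_small[OF A] False by simp
  moreover have "pcomp (n+q) (pmul C B) = pmul C B" by (rule pcomp_hom[OF phom_pmul[OF C B]])
  ultimately have "pmul B C = 0" using eq pmul_comm by metis
  then have "C = 0" using pmul_idom B0 by blast
  then show ?thesis by (intro exI[of _ 0] exI[of _ 0] conjI exI[of _ 0]) auto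
next
  case True
  define Q0 where "Q0 = pcomp (n+q-p) Q"
  have hQ0: "phom Q0 (n+q-p)" unfolding Q0_def by (rule phom_comp)
  have eq0: "pmul A Q0 = pmul C B"
  proof -
    have "pcomp (n+q) (pmul A Q) = pmul A Q0" using pcomp_pmul'[OF A, of "n+q" Q] True by (simp add: Q0_def)
    moreover have "pcomp (n+q) (pmul C B) = pmul C B" by (rule pcomp_hom[OF phom_pmul[OF C B]])
    ultimately show ?thesis using eq by simp
  qed
  have req: "pmul (pres A) (pres Q0) = pmul (pres C) (pres B)"
    using eq0 by (metis pres_pmul)
  have ra0: "pres A (0,0,p) \<noteq> 0" using lead by (simp add: pres_def)
  obtain e0 where e0: "phom e0 (n - p)" "isbin e0" "pres C = pmul (pres A) e0" "p \<le> n \<or> e0 = 0"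
    using Cop2[OF phom_res[OF A] isbin_res phom_res[OF B] isbin_res ra0 bez phom_res[OF C] isbin_res
        phom_res[OF hQ0] isbin_res True req] by blast
  define C1 where "C1 = C - pmul A e0"
  have hC1: "phom C1 n"
  proof (cases "e0 = 0")
    case True then show ?thesis using C by (simp add: C1_def)
  next
    case False
    then have "p \<le> n" using e0(4) by simp
    then have "phom (pmul A e0) n" using phom_pmul[OF A e0(1)] by simp
    then show ?thesis using C phom_diff unfolding C1_def by blast
  qed
  have rC1: "pres C1 = 0"
    using e0(2,3) by (simp add: C1_def pres_diff pres_pmul isbin_def)
  define Q1 where "Q1 = Q0 - pmul e0 B"
  have "pmul (pres A) (pres Q1) = 0"
  proof -
    have "pmul (pres A) (pres Q1) = pmul (pres A) (pres Q0) - pmul (pmul (pres A) e0) (pres B)"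
      using e0(2) by (simp add: Q1_def pres_diff pres_pmul isbin_def pmul_diff_right pmul_assoc)
    then show ?thesis using req e0(3) by simp
  qed
  then have rQ1: "pres Q1 = 0" using pmul_idom pres_nz[of "pres A" 0 p, OF ra0] by (metis pres_res)
  have "pmul A Q1 = pmul C1 B"
    by (simp add: Q1_def C1_def pmul_diff_right pmul_diff_left eq0 pmul_assoc)
  then show ?thesis using hC1 rC1 rQ1 by (intro exI[of _ e0] exI[of _ C1]) (auto simp: C1_def)
qed

lemma lift:
  fixes A B :: "'a::field pol3"
  assumes A: "phom A p" and B: "phom B q" and lead: "A (0,0,p) \<noteq> 0" and B0: "B \<noteq> 0"
    and bez: "u * dh p (pres A) + v * dh q (pres B) = 1"
  shows "phom C n \<Longrightarrow> pmul A Q = pmul C B \<Longrightarrow> \<exists>E. C = pmul A E"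
proof (induction n arbitrary: C Q)
  case (0 C Q)
  obtain e0 C1 where s: "C = C1 + pmul A e0" "phom C1 0" "pres C1 = 0"
    using lift_step[OF A B lead B0 bez 0(1,2)] by blast
  then have "C1 = 0" using hom0_res0 by blast
  then show ?case using s by auto
next
  case (Suc n C Q)
  obtain e0 C1 Q1 where s: "C = C1 + pmul A e0" "phom C1 (Suc n)" "pres C1 = 0"
      "pmul A Q1 = pmul C1 B" "pres Q1 = 0"
    using lift_step[OF A B lead B0 bez Suc(2,3)] by blast
  define C' where "C' = unsh C1"
  define Q' where "Q' = unsh Q1"
  have C1s: "C1 = shx C'" and Q1s: "Q1 = shx Q'"
    using res0_shx s(3,5) by (auto simp: C'_def Q'_def)
  have "shx (pmul A Q') = shx (pmul C' B)"
    using s(4) by (simp add: C1s Q1s shx_pmul shx_pmul_right)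
  then have "pmul A Q' = pmul C' B" by (rule shx_inj)
  moreover have "phom C' n" unfolding C'_def by (rule phom_unsh[OF s(2)])
  ultimately obtain E where "C' = pmul A E" using Suc.IH by blast
  then have "C = pmul A (shx E + e0)"
    using s(1) C1s by (simp add: pmul_add_right shx_pmul_right)
  then show ?case by blast
qed


definition good :: "nat \<Rightarrow> (nat \<Rightarrow> nat) \<Rightarrow> (nat \<Rightarrow> 'a::field pol3) \<Rightarrow> bool" where
  "good r ds Fs \<longleftrightarrow> (\<forall>i<r. phom (Fs i) (ds i) \<and> Fs i (0,0,ds i) \<noteq> 0) \<and>
     (\<forall>i<r. \<forall>l<r. i \<noteq> l \<longrightarrow> (\<exists>u v. u * dh (ds i) (pres (Fs i)) + v * dh (ds l) (pres (Fs l)) = 1))"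

definition pdvd :: "'a::comm_ring_1 pol3 \<Rightarrow> 'a pol3 \<Rightarrow> bool" where
  "pdvd A C \<longleftrightarrow> (\<exists>E. C = pmul A E)"

lemma phom_pone: "phom pone 0" by (simp add: phom_def pone_def mdeg_def)

lemma phom_pprod: "(\<And>x. x \<in> set L \<Longrightarrow> phom (Fs x) (ds x)) \<Longrightarrow> phom (pprod (map Fs L)) (\<Sum>x\<leftarrow>L. ds x)"
  by (induction L) (auto simp: phom_pone intro: phom_pmul)

lemma good_nz: "good r ds Fs \<Longrightarrow> i < r \<Longrightarrow> Fs i \<noteq> 0"
  unfolding good_def by auto

lemma cop_list:
  fixes Fs :: "nat \<Rightarrow> 'a::field pol3"
  assumes g: "good r ds Fs" and i: "i < r"
  shows "set L \<subseteq> {l. l < r \<and> l \<noteq> i} \<Longrightarrow> phom h n \<Longrightarrow> pdvd (Fs i) (pmul h (pprod (map Fs L))) \<Longrightarrow> pdvd (Fs i) h"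
proof (induction L arbitrary: h n)
  case Nil
  then show ?case
    by (simp add: pmul_comm[of h pone])
next
  case (Cons l L h n)
  have l: "l < r" "l \<noteq> i" using Cons.prems(1) by auto
  have hP: "phom (pprod (map Fs L)) (\<Sum>x\<leftarrow>L. ds x)"
    by (rule phom_pprod) (use Cons.prems(1) g in \<open>auto simp: good_def\<close>)
  obtain E where E: "pmul h (pprod (map Fs (l # L))) = pmul (Fs i) E"
    using Cons.prems(3) by (auto simp: pdvd_def)
  then have E': "pmul (Fs i) E = pmul (pmul h (pprod (map Fs L))) (Fs l)"
    by (simp add: pmul_assoc pmul_comm[of "Fs l"])
  have Ai: "phom (Fs i) (ds i)" "Fs i (0,0,ds i) \<noteq> 0" using g i by (auto simp: good_def)
  have Bl: "phom (Fs l) (ds l)" "Fs l \<noteq> 0" using g l good_nz by (auto simp: good_def)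
  obtain u v where uv: "u * dh (ds i) (pres (Fs i)) + v * dh (ds l) (pres (Fs l)) = 1"
    using g i l unfolding good_def by blast
  have "pdvd (Fs i) (pmul h (pprod (map Fs L)))"
    using lift[OF Ai(1) Bl(1) Ai(2) Bl(2) uv phom_pmul[OF Cons.prems(2) hP] E'] by (auto simp: pdvd_def)
  then show ?case using Cons.IH[OF _ Cons.prems(2)] Cons.prems(1) by auto
qed

lemma Psi_pprod_set: "distinct L \<Longrightarrow> Psi (pprod (map Fs L)) = (\<Prod>x\<in>set L. Psi (Fs x))"
proof (induction L)
  case Nil then show ?case by (simp add: Psi_one)
next
  case (Cons a L) then show ?case by (simp add: Psi_pmul)
qed

lemma Psi_cofactor:
  "Psi (Defs.cofactor r Fs i) = (\<Prod>l\<in>{0..<r} - {i}. Psi (Fs l))"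
proof -
  have "Psi (Defs.cofactor r Fs i) = (\<Prod>l\<in>set (filter (\<lambda>l. l \<noteq> i) [0..<r]). Psi (Fs l))"
    unfolding Defs.cofactor_def by (rule Psi_pprod_set) simp
  also have "set (filter (\<lambda>l. l \<noteq> i) [0..<r]) = {0..<r} - {i}" by auto
  finally show ?thesis .
qed

definition Ftot :: "nat \<Rightarrow> (nat \<Rightarrow> 'a::comm_ring_1 pol3) \<Rightarrow> 'a pol3" where
  "Ftot r Fs = pprod (map Fs [0..<r])"

lemma Psi_Ftot: "Psi (Ftot r Fs) = (\<Prod>l\<in>{0..<r}. Psi (Fs l))"
  unfolding Ftot_def by (subst Psi_pprod_set) auto

lemma cof_F: "i < r \<Longrightarrow> pmul (Fs i) (Defs.cofactor r Fs i) = Ftot r Fs"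
  apply (rule Psi_inj)
  apply (simp add: Psi_pmul Psi_cofactor Psi_Ftot)
  by (metis atLeastLessThan_iff finite_atLeastLessThan le0 prod.remove)

lemma cof_other: assumes "i < r" "l < r" "l \<noteq> i"
  shows "Defs.cofactor r Fs l = pmul (Fs i) (pprod (map Fs (filter (\<lambda>x. x \<noteq> l \<and> x \<noteq> i) [0..<r])))"
proof (rule Psi_inj)
  have s: "set (filter (\<lambda>x. x \<noteq> l \<and> x \<noteq> i) [0..<r]) = {0..<r} - {l} - {i}" by auto
  have "Psi (pprod (map Fs (filter (\<lambda>x. x \<noteq> l \<and> x \<noteq> i) [0..<r]))) = (\<Prod>x\<in>{0..<r} - {l} - {i}. Psi (Fs x))"
    unfolding s[symmetric] by (rule Psi_pprod_set) simp
  moreover have "Psi (Defs.cofactor r Fs l) = Psi (Fs i) * (\<Prod>x\<in>{0..<r} - {l} - {i}. Psi (Fs x))"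
    unfolding Psi_cofactor using assms
    by (subst prod.remove[of _ i]) auto
  ultimately show "Psi (Defs.cofactor r Fs l) = Psi (pmul (Fs i) (pprod (map Fs (filter (\<lambda>x. x \<noteq> l \<and> x \<noteq> i) [0..<r]))))"
    by (simp add: Psi_pmul)
qed

lemma phom_cofactor:
  assumes "\<forall>l<r. phom (Fs l) (ds l)"
  shows "phom (Defs.cofactor r Fs i) (\<Sum>l\<leftarrow>filter (\<lambda>l. l \<noteq> i) [0..<r]. ds l)"
  unfolding Defs.cofactor_def by (rule phom_pprod) (use assms in auto)


lemma sum_filter_ne: "i < r \<Longrightarrow> (\<Sum>l\<leftarrow>filter (\<lambda>l. l \<noteq> i) [0..<r]. (ds l::nat)) = (\<Sum>l<r. ds l) - ds i"
proof -
  assume i: "i < r"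
  have "(\<Sum>l\<leftarrow>filter (\<lambda>l. l \<noteq> i) [0..<r]. ds l) = (\<Sum>l\<in>{..<r} - {i}. ds l)"
    by (subst sum_list_distinct_conv_sum_set) (auto intro: sum.cong)
  also have "\<dots> = (\<Sum>l<r. ds l) - ds i"
    using i by (simp add: sum_diff1_nat)
  finally show ?thesis .
qed

lemma Ftot_nz:
  fixes Fs :: "nat \<Rightarrow> 'a::field pol3"
  assumes "good r ds Fs" shows "Ftot r Fs \<noteq> 0"
proof
  assume "Ftot r Fs = 0"
  then have "(\<Prod>l\<in>{0..<r}. Psi (Fs l)) = 0" using Psi_Ftot Psi_zero by metis
  then obtain l where "l < r" "Psi (Fs l) = 0" by auto
  then show False using good_nz[OF assms] Psi_zero Psi_inj by metis
qed

lemma kernel: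
  fixes Fs h :: "nat \<Rightarrow> 'a::field pol3"
  assumes g: "good r ds Fs" and d: "d = (\<Sum>l<r. ds l)"
    and h: "\<And>i. i < r \<Longrightarrow> (if d - ds i \<le> j then phom (h i) (j - (d - ds i)) else h i = 0)"
    and z: "(\<Sum>i<r. pmul (h i) (Defs.cofactor r Fs i)) = 0"
  shows "\<exists>gg. (\<forall>i<r. phom (gg i) (j - d) \<and> h i = pmul (Fs i) (gg i) \<and> (j < d \<longrightarrow> gg i = 0)) \<and> (\<Sum>i<r. gg i) = 0"
proof -
  have dsd: "i < r \<Longrightarrow> ds i \<le> d" for i unfolding d by (rule member_le_sum) auto
  have hh: "i < r \<Longrightarrow> \<exists>n. phom (h i) n" for i using h[of i] by (metis phom_zero)
  have dv: "\<exists>G. h i = pmul (Fs i) G" if i: "i < r" for i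
  proof -
    have "pmul (h i) (Defs.cofactor r Fs i) = - (\<Sum>l\<in>{..<r} - {i}. pmul (h l) (Defs.cofactor r Fs l))"
      using z i by (simp add: sum.remove[of "{..<r}" i] eq_neg_iff_add_eq_0)
    also have "\<dots> = - (\<Sum>l\<in>{..<r} - {i}. pmul (Fs i) (pmul (h l) (pprod (map Fs (filter (\<lambda>x. x \<noteq> l \<and> x \<noteq> i) [0..<r])))))"
    proof (intro arg_cong[where f=uminus] sum.cong refl)
      fix l assume l: "l \<in> {..<r} - {i}"
      have "Defs.cofactor r Fs l = pmul (Fs i) (pprod (map Fs (filter (\<lambda>x. x \<noteq> l \<and> x \<noteq> i) [0..<r])))"
        using l i by (intro cof_other) auto
      then show "pmul (h l) (Defs.cofactor r Fs l) = pmul (Fs i) (pmul (h l) (pprod (map Fs (filter (\<lambda>x. x \<noteq> l \<and> x \<noteq> i) [0..<r]))))"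
        by (metis pmul_assoc pmul_comm)
    qed
    also have "\<dots> = pmul (Fs i) (- (\<Sum>l\<in>{..<r} - {i}. pmul (h l) (pprod (map Fs (filter (\<lambda>x. x \<noteq> l \<and> x \<noteq> i) [0..<r])))))"
      by (simp add: pmul_sum_right[symmetric] pmul_diff_right[of _ 0, simplified])
    finally have "pdvd (Fs i) (pmul (h i) (pprod (map Fs (filter (\<lambda>l. l \<noteq> i) [0..<r]))))"
      unfolding pdvd_def Defs.cofactor_def by blast
    moreover obtain n where "phom (h i) n" using hh[OF i] by blast
    ultimately have "pdvd (Fs i) (h i)" using cop_list[OF g i, of "filter (\<lambda>l. l \<noteq> i) [0..<r]" "h i" n] by auto
    then show ?thesis unfolding pdvd_def by blast
  qed
  obtain G where G: "\<And>i. i < r \<Longrightarrow> h i = pmul (Fs i) (G i)" using dv by metis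
  define gg where "gg i = (if d \<le> j then pcomp (j - d) (G i) else 0)" for i
  have hg: "h i = pmul (Fs i) (gg i)" if i: "i < r" for i
  proof -
    have Fi: "phom (Fs i) (ds i)" using g i by (auto simp: good_def)
    show ?thesis
    proof (cases "d - ds i \<le> j")
      case True
      then have hi: "phom (h i) (j - (d - ds i))" using h[OF i] by simp
      have "h i = pcomp (j - (d - ds i)) (pmul (Fs i) (G i))" using pcomp_hom[OF hi] G[OF i] by simp
      also have "\<dots> = pmul (Fs i) (gg i)"
      proof (cases "d \<le> j")
        case True2: True
        have "j - (d - ds i) - ds i = j - d" "ds i \<le> j - (d - ds i)" using True2 dsd[OF i] by auto
        then show ?thesis using pcomp_pmul'[OF Fi, of "j - (d - ds i)"] True2 by (simp add: gg_def)
      next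
        case False
        then have "j - (d - ds i) < ds i" using True dsd[OF i] by auto
        then show ?thesis using pcomp_pmul_small[OF Fi] False by (simp add: gg_def)
      qed
      finally show ?thesis .
    next
      case False
      then have "j < d" using dsd[OF i] by auto
      then show ?thesis using h[OF i] False by (simp add: gg_def)
    qed
  qed
  have "pmul (Ftot r Fs) (\<Sum>i<r. gg i) = 0"
  proof -
    have "pmul (Ftot r Fs) (\<Sum>i<r. gg i) = (\<Sum>i<r. pmul (gg i) (pmul (Fs i) (Defs.cofactor r Fs i)))"
      by (simp add: pmul_sum_right cof_F pmul_comm)
    also have "\<dots> = (\<Sum>i<r. pmul (h i) (Defs.cofactor r Fs i))"
      by (intro sum.cong refl) (simp add: hg pmul_assoc[symmetric] pmul_comm[of "gg _"])
    finally show ?thesis using z by simp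
  qed
  then have "(\<Sum>i<r. gg i) = 0" using pmul_idom Ftot_nz[OF g] by blast
  moreover have "phom (gg i) (j - d)" for i by (simp add: gg_def phom_comp)
  ultimately show ?thesis using hg by (intro exI[of _ gg]) (auto simp: gg_def)
qed


context vector_space_pair begin

lemma my_dim_image_eq:
  assumes lf: "Vector_Spaces.linear s1 s2 f"
    and fi: "inj_on f (vs1.span S)"
  shows "vs2.dim (f ` S) = vs1.dim S"
proof -
  obtain B where B: "B \<subseteq> S" "vs1.independent B" "S \<subseteq> vs1.span B" "card B = vs1.dim S"
    using vs1.basis_exists[of S] by auto
  then have "vs1.span S = vs1.span B"
    using vs1.span_mono[of B S] vs1.span_mono[of S "vs1.span B"] vs1.span_span[of B] by auto
  moreover have "card (f ` B) = card B"
    using assms card_image[of f B] inj_on_subset[of f "vs1.span S" B] B vs1.span_superset by auto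
  moreover have "(f ` B) \<subseteq> (f ` S)"
    using B by auto
  ultimately show ?thesis
    by (metis B(2) B(4) fi lf linear_dependent_inj_imageD linear_span_image vs2.dim_eq_card_independent vs2.dim_span)
qed

lemma span_disjoint:
  assumes ind: "vs1.independent (C \<union> D)" and disj: "C \<inter> D = {}" and fin: "finite C" "finite D"
    and z: "z \<in> vs1.span C" "z \<in> vs1.span D"
  shows "z = 0"
proof -
  obtain u where u: "z = (\<Sum>v\<in>C. s1 (u v) v)" using z(1) vs1.span_finite[OF fin(1)] by auto
  obtain w where w: "z = (\<Sum>v\<in>D. s1 (w v) v)" using z(2) vs1.span_finite[OF fin(2)] by auto
  define c where "c v = (if v \<in> C then u v else - w v)" for v
  have "(\<Sum>v\<in>C \<union> D. s1 (c v) v) = (\<Sum>v\<in>C. s1 (c v) v) + (\<Sum>v\<in>D. s1 (c v) v)"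
    using disj fin by (simp add: sum.union_disjoint)
  also have "(\<Sum>v\<in>C. s1 (c v) v) = z" using u by (simp add: c_def)
  also have "(\<Sum>v\<in>D. s1 (c v) v) = - z"
  proof -
    have "(\<Sum>v\<in>D. s1 (c v) v) = (\<Sum>v\<in>D. - s1 (w v) v)"
      using disj by (intro sum.cong refl) (auto simp: c_def vs1.scale_minus_left)
    then show ?thesis using w by (simp add: sum_negf)
  qed
  finally have "(\<Sum>v\<in>C \<union> D. s1 (c v) v) = 0" by simp
  then have "\<forall>v\<in>C \<union> D. c v = 0" using ind fin vs1.dependent_finite[of "C \<union> D"] by auto
  then have "\<forall>v\<in>C. u v = 0" unfolding c_def by (metis UnI1)
  then show "z = 0" using u by simp
qed

lemma rank_nullity_sub:
  assumes lf: "Vector_Spaces.linear s1 s2 f" and W: "vs1.subspace W" and fin: "finite Bw" and Wsp: "W \<subseteq> vs1.span Bw"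
  shows "vs2.dim (f ` W) + vs1.dim {x\<in>W. f x = 0} = vs1.dim W"
proof -
  define K where "K = {x\<in>W. f x = 0}"
  obtain BK where BK: "BK \<subseteq> K" "vs1.independent BK" "K \<subseteq> vs1.span BK" "card BK = vs1.dim K"
    using vs1.basis_exists[of K] by auto
  have "BK \<subseteq> W" using BK(1) by (auto simp: K_def)
  then obtain B where B: "BK \<subseteq> B" "B \<subseteq> W" "vs1.independent B" "W \<subseteq> vs1.span B"
    using vs1.maximal_independent_subset_extend[of BK W] BK(2) by metis
  have finB: "finite B" using vs1.independent_span_bound[OF fin B(3)] B(2) Wsp by auto
  have cB: "card B = vs1.dim W" using vs1.basis_card_eq_dim[OF B(2) B(4) B(3)] .
  have finBK: "finite BK" using finB B(1) finite_subset by blast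
  define C where "C = B - BK"
  have finC: "finite C" using finB by (simp add: C_def)
  have indC: "vs1.independent C" using B(3) vs1.independent_mono by (auto simp: C_def)
  have cC: "card C = card B - card BK" using B(1) finB by (simp add: C_def card_Diff_subset finBK)
  have spB: "vs1.span B = W" using vs1.span_subspace[OF B(2) B(4) W] .
  have fW: "f ` W = vs2.span (f ` B)" using linear_span_image[OF lf, of B] spB by simp
  have f0: "x \<in> BK \<Longrightarrow> f x = 0" for x using BK(1) by (auto simp: K_def)
  have "vs2.span (f ` B) = vs2.span (f ` C)"
  proof
    show "vs2.span (f ` C) \<subseteq> vs2.span (f ` B)" by (rule vs2.span_mono) (auto simp: C_def)
    have "f ` B \<subseteq> vs2.span (f ` C)"
    proof
      fix y assume "y \<in> f ` B"
      then obtain x where x: "x \<in> B" "y = f x" by auto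
      show "y \<in> vs2.span (f ` C)"
      proof (cases "x \<in> BK")
        case True then show ?thesis using x f0 vs2.span_zero by auto
      next
        case False then show ?thesis using x by (auto simp: C_def intro: vs2.span_base)
      qed
    qed
    then show "vs2.span (f ` B) \<subseteq> vs2.span (f ` C)"
      using vs2.span_minimal vs2.subspace_span by blast
  qed
  then have "vs2.dim (f ` W) = vs2.dim (f ` C)" using fW vs2.dim_span by metis
  also have "\<dots> = vs1.dim C"
  proof (rule my_dim_image_eq[OF lf])
    show "inj_on f (vs1.span C)"
    proof (rule inj_onI)
      fix x y assume xy: "x \<in> vs1.span C" "y \<in> vs1.span C" "f x = f y"
      have z1: "x - y \<in> vs1.span C" using xy vs1.span_diff by blast
      have "vs1.span C \<subseteq> W" using spB vs1.span_mono[of C B] by (auto simp: C_def)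
      then have "x - y \<in> K" using z1 xy(3) linear_diff[OF lf] by (auto simp: K_def)
      then have z2: "x - y \<in> vs1.span BK" using BK(3) by blast
      have "vs1.independent (C \<union> BK)" using B(3) B(1) by (simp add: C_def Un_absorb2)
      then have "x - y = 0" using span_disjoint[OF _ _ finC finBK z1 z2] by (auto simp: C_def)
      then show "x = y" by simp
    qed
  qed
  also have "\<dots> = card C" using indC vs1.dim_eq_card_independent by blast
  finally have "vs2.dim (f ` W) = card B - card BK" using cC by simp
  moreover have "card BK \<le> card B" using B(1) finB card_mono by blast
  ultimately show ?thesis using cB BK(4) by (simp add: K_def)
qed

end


lemma sum_fun_apply: "(\<Sum>i\<in>S. f i) x = (\<Sum>i\<in>S. (f i x :: 'b::comm_monoid_add))"
  by (induction S rule: infinite_finite_induct) auto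

definition gscale :: "'a::field \<Rightarrow> ('i \<Rightarrow> 'a) \<Rightarrow> ('i \<Rightarrow> 'a)" where
  "gscale a f = (\<lambda>x. a * f x)"

lemma vs_gscale: "vector_space (gscale :: 'a::field \<Rightarrow> ('i \<Rightarrow> 'a) \<Rightarrow> ('i \<Rightarrow> 'a))"
  by unfold_locales (simp_all add: gscale_def algebra_simps fun_eq_iff)

interpretation gv: vector_space "gscale :: 'a::field \<Rightarrow> ('i \<Rightarrow> 'a) \<Rightarrow> ('i \<Rightarrow> 'a)"
  by (rule vs_gscale)

interpretation gvp: vector_space_pair "gscale :: 'a::field \<Rightarrow> ('i \<Rightarrow> 'a) \<Rightarrow> ('i \<Rightarrow> 'a)"
   "gscale :: 'a::field \<Rightarrow> ('j \<Rightarrow> 'a) \<Rightarrow> ('j \<Rightarrow> 'a)"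
  by unfold_locales

lemma fscale_gscale: "fscale = gscale"
  by (simp add: fscale_def gscale_def fun_eq_iff)

definition Sp :: "'i set \<Rightarrow> ('i \<Rightarrow> 'a::zero) set" where
  "Sp T = {f. \<forall>x. x \<notin> T \<longrightarrow> f x = 0}"

definition pdelta :: "'i \<Rightarrow> 'i \<Rightarrow> 'a::field" where
  "pdelta t = (\<lambda>x. if x = t then 1 else 0)"

lemma subspace_Sp: "gv.subspace (Sp T :: ('i \<Rightarrow> 'a::field) set)"
  unfolding gv.subspace_def by (auto simp: Sp_def gscale_def)

lemma Sp_expand:
  assumes "finite T" "f \<in> Sp T"
  shows "f = (\<Sum>t\<in>T. gscale (f t) (pdelta t :: 'i \<Rightarrow> 'a::field))"
proof
  fix x
  show "f x = (\<Sum>t\<in>T. gscale (f t) (pdelta t)) x"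
  proof (cases "x \<in> T")
    case True
    have "(\<Sum>t\<in>T. gscale (f t) (pdelta t)) x = (\<Sum>t\<in>T. if t = x then f t else 0)"
      unfolding sum_fun_apply by (intro sum.cong refl) (auto simp: gscale_def pdelta_def)
    then show ?thesis using assms(1) True by simp
  next
    case False
    have "(\<Sum>t\<in>T. gscale (f t) (pdelta t)) x = 0"
      unfolding sum_fun_apply using False by (intro sum.neutral) (auto simp: gscale_def pdelta_def)
    then show ?thesis using assms False by (auto simp: Sp_def)
  qed
qed

lemma span_delta:
  assumes "finite T"
  shows "gv.span (pdelta ` T) = (Sp T :: ('i \<Rightarrow> 'a::field) set)"
proof
  show "gv.span ((pdelta :: 'i \<Rightarrow> 'i \<Rightarrow> 'a) ` T) \<subseteq> Sp T"
  proof (rule gv.span_minimal[OF _ subspace_Sp])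
    show "(pdelta :: 'i \<Rightarrow> 'i \<Rightarrow> 'a) ` T \<subseteq> Sp T" by (auto simp: Sp_def pdelta_def)
  qed
  show "Sp T \<subseteq> gv.span ((pdelta :: 'i \<Rightarrow> 'i \<Rightarrow> 'a) ` T)"
  proof
    fix f :: "'i \<Rightarrow> 'a" assume f: "f \<in> Sp T"
    have "(\<Sum>t\<in>T. gscale (f t) (pdelta t)) \<in> gv.span ((pdelta :: 'i \<Rightarrow> 'i \<Rightarrow> 'a) ` T)"
      by (intro gv.span_sum gv.span_scale gv.span_base) auto
    then show "f \<in> gv.span ((pdelta :: 'i \<Rightarrow> 'i \<Rightarrow> 'a) ` T)" using Sp_expand[OF assms f] by simp
  qed
qed

lemma inj_delta: "inj (pdelta :: 'i \<Rightarrow> 'i \<Rightarrow> 'a::field)"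
proof
  fix x y :: 'i assume "pdelta x = (pdelta y :: 'i \<Rightarrow> 'a)"
  then have "pdelta x x = (pdelta y x :: 'a)" by simp
  then show "x = y" by (simp add: pdelta_def split: if_splits)
qed

lemma indep_delta:
  assumes "finite T"
  shows "gv.independent ((pdelta :: 'i \<Rightarrow> 'i \<Rightarrow> 'a::field) ` T)"
proof -
  have "\<not> gv.dependent (pdelta ` T :: ('i \<Rightarrow> 'a) set)"
  proof
    assume "gv.dependent (pdelta ` T :: ('i \<Rightarrow> 'a) set)"
    then obtain u where u: "\<exists>v\<in>pdelta ` T. u v \<noteq> 0" "(\<Sum>v\<in>pdelta ` T. gscale (u v) v) = (0 :: 'i \<Rightarrow> 'a)"
      using gv.dependent_finite[of "pdelta ` T"] assms by auto
    obtain t where t: "t \<in> T" "u (pdelta t) \<noteq> 0" using u(1) by auto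
    have "(\<Sum>v\<in>pdelta ` T. gscale (u v) v) t = (\<Sum>s\<in>T. gscale (u (pdelta s)) (pdelta s) t)"
      by (simp add: sum_fun_apply sum.reindex inj_on_subset[OF inj_delta])
    also have "\<dots> = (\<Sum>s\<in>T. if s = t then u (pdelta t) else 0)"
      by (intro sum.cong refl) (auto simp: gscale_def pdelta_def)
    also have "\<dots> = u (pdelta t)" using t(1) assms by simp
    finally show False using u(2) t(2) by simp
  qed
  then show ?thesis by simp
qed

lemma dim_Sp:
  assumes "finite T"
  shows "gv.dim (Sp T :: ('i \<Rightarrow> 'a::field) set) = card T"
proof -
  have "gv.dim (Sp T :: ('i \<Rightarrow> 'a) set) = card ((pdelta :: 'i \<Rightarrow> 'i \<Rightarrow> 'a) ` T)"
    using gv.dim_eq_card[of "pdelta ` T" "Sp T"] span_delta[OF assms] indep_delta[OF assms]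
      gv.span_eq_iff subspace_Sp by metis
  also have "\<dots> = card T" by (rule card_image[OF inj_on_subset[OF inj_delta]]) simp
  finally show ?thesis .
qed


definition Mon :: "nat \<Rightarrow> mon set" where "Mon e = {m. mdeg m = e}"

lemma finite_Mon: "finite (Mon e)"
proof -
  have "Mon e \<subseteq> {0..e} \<times> {0..e} \<times> {0..e}" by (auto simp: Mon_def mdeg_def)
  then show ?thesis by (rule finite_subset) auto
qed

definition TW :: "nat \<Rightarrow> (nat \<Rightarrow> nat) \<Rightarrow> nat \<Rightarrow> nat \<Rightarrow> (nat \<times> mon) set" where
  "TW r ds d j = {(i,m). i < r \<and> d - ds i \<le> j \<and> mdeg m = j - (d - ds i)}"

lemma finite_TW: "finite (TW r ds d j)"
proof -
  have "TW r ds d j \<subseteq> (\<Union>i<r. {i} \<times> Mon (j - (d - ds i)))" by (auto simp: TW_def Mon_def)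
  then show ?thesis by (rule finite_subset) (auto simp: finite_Mon)
qed

definition Phi :: "nat \<Rightarrow> (nat \<Rightarrow> 'a::comm_ring_1 pol3) \<Rightarrow> (nat \<times> mon \<Rightarrow> 'a) \<Rightarrow> 'a pol3" where
  "Phi r Fs H = (\<Sum>i<r. pmul (\<lambda>m. H (i,m)) (Defs.cofactor r Fs i))"

lemma pmul_gscale: "pmul (gscale c f) g = gscale c (pmul f g)"
  by (simp add: pmul_def gscale_def sum_distrib_left fun_eq_iff algebra_simps)

lemma linear_Phi: "Vector_Spaces.linear gscale gscale (Phi r (Fs :: nat \<Rightarrow> 'a::field pol3))"
proof -
  have add: "Phi r Fs (x + y) = Phi r Fs x + Phi r Fs y" for x y :: "nat \<times> mon \<Rightarrow> 'a"
  proof -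
    have "(\<lambda>m. (x + y) (i, m)) = (\<lambda>m. x (i,m)) + (\<lambda>m. y (i,m))" for i by auto
    then show ?thesis by (simp add: Phi_def pmul_add_left sum.distrib)
  qed
  have sc: "Phi r Fs (gscale c x) = gscale c (Phi r Fs x)" for c and x :: "nat \<times> mon \<Rightarrow> 'a"
  proof -
    have "(\<lambda>m. gscale c x (i, m)) = gscale c (\<lambda>m. x (i,m))" for i by (auto simp: gscale_def)
    then have "Phi r Fs (gscale c x) = (\<Sum>i<r. gscale c (pmul (\<lambda>m. x (i,m)) (Defs.cofactor r Fs i)))"
      by (simp add: Phi_def pmul_gscale)
    also have "\<dots> = gscale c (Phi r Fs x)"
      by (simp add: Phi_def gscale_def fun_eq_iff sum_fun_apply sum_distrib_left)
    finally show ?thesis .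
  qed
  show ?thesis unfolding Vector_Spaces.linear_iff using add sc vs_gscale[where 'i=mon] vs_gscale[where 'i="nat \<times> mon"] by blast
qed

lemma phom_cof:
  fixes Fs :: "nat \<Rightarrow> 'a::field pol3"
  assumes g: "good r ds Fs" and d: "d = (\<Sum>l<r. ds l)" and i: "i < r"
  shows "phom (Defs.cofactor r Fs i) (d - ds i)"
proof -
  have "\<forall>l<r. phom (Fs l) (ds l)" using g by (auto simp: good_def)
  from phom_cofactor[OF this, of i] show ?thesis using sum_filter_ne[OF i, of ds] d by simp
qed

lemma is_poly_Mon: "(\<forall>m. f m \<noteq> 0 \<longrightarrow> mdeg m = e) \<Longrightarrow> is_poly f"
  unfolding is_poly_def by (rule finite_subset[OF _ finite_Mon[of e]]) (auto simp: Mon_def)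

lemma deg_part_eq:
  fixes Fs :: "nat \<Rightarrow> 'a::field pol3"
  assumes g: "good r ds Fs" and d: "d = (\<Sum>l<r. ds l)"
  shows "deg_part (I_F r Fs) j = Phi r Fs ` Sp (TW r ds d j)"
proof
  show "deg_part (I_F r Fs) j \<subseteq> Phi r Fs ` Sp (TW r ds d j)"
  proof
    fix f assume f: "f \<in> deg_part (I_F r Fs) j"
    then obtain h where h: "f = (\<lambda>m. \<Sum>i<r. pmul (h i) (Defs.cofactor r Fs i) m)"
      by (auto simp: deg_part_def I_F_def gen_ideal_def)
    have hf: "phom f j" using f by (auto simp: deg_part_def phom_def)
    have f2: "f = (\<Sum>i<r. pmul (h i) (Defs.cofactor r Fs i))" using h by (simp add: sum_fun_apply fun_eq_iff)
    define H where "H = (\<lambda>(i,m). if i < r \<and> d - ds i \<le> j then pcomp (j - (d - ds i)) (h i) m else 0)"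
    have HS: "H \<in> Sp (TW r ds d j)"
      by (auto simp: Sp_def H_def TW_def pcomp_def)
    have "f = pcomp j f" using pcomp_hom[OF hf] by simp
    also have "\<dots> = (\<Sum>i<r. pcomp j (pmul (Defs.cofactor r Fs i) (h i)))"
      by (simp add: f2 pcomp_sum pmul_comm)
    also have "\<dots> = (\<Sum>i<r. pmul (\<lambda>m. H (i,m)) (Defs.cofactor r Fs i))"
    proof (intro sum.cong refl)
      fix i assume "i \<in> {..<r}"
      then have i: "i < r" by simp
      note hc = phom_cof[OF g d i]
      show "pcomp j (pmul (Defs.cofactor r Fs i) (h i)) = pmul (\<lambda>m. H (i,m)) (Defs.cofactor r Fs i)"
      proof (cases "d - ds i \<le> j")
        case True
        have "(\<lambda>m. H (i,m)) = pcomp (j - (d - ds i)) (h i)" using True i by (simp add: H_def fun_eq_iff)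
        then show ?thesis using pcomp_pmul'[OF hc True] by (simp add: pmul_comm)
      next
        case False
        have "(\<lambda>m. H (i,m)) = 0" using False by (simp add: H_def fun_eq_iff)
        then show ?thesis using pcomp_pmul_small[OF hc] False by simp
      qed
    qed
    finally show "f \<in> Phi r Fs ` Sp (TW r ds d j)" using HS unfolding Phi_def by blast
  qed
  show "Phi r Fs ` Sp (TW r ds d j) \<subseteq> deg_part (I_F r Fs) j"
  proof
    fix f assume "f \<in> Phi r Fs ` Sp (TW r ds d j)"
    then obtain H where H: "H \<in> Sp (TW r ds d j)" "f = Phi r Fs H" by auto
    have hi: "(if d - ds i \<le> j then phom (\<lambda>m. H (i,m)) (j - (d - ds i)) else (\<lambda>m. H (i,m)) = 0)" if "i < r" for i
      using H(1) that by (auto simp: Sp_def TW_def phom_def fun_eq_iff)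
    have "phom (pmul (\<lambda>m. H (i,m)) (Defs.cofactor r Fs i)) j" if i: "i < r" for i
    proof (cases "d - ds i \<le> j")
      case True
      then show ?thesis using phom_pmul[OF _ phom_cof[OF g d i]] hi[OF i] by fastforce
    next
      case False then show ?thesis using hi[OF i] by simp
    qed
    then have hf: "phom f j" unfolding H(2) Phi_def by (intro phom_sum) auto
    have "f \<in> gen_ideal r (Defs.cofactor r Fs)"
      unfolding gen_ideal_def
    proof (intro CollectI exI[of _ "\<lambda>i m. H (i,m)"] conjI allI impI)
      fix i assume i: "i < r"
      show "is_poly (\<lambda>m. H (i, m))"
        using H(1) by (intro is_poly_Mon[of _ "j - (d - ds i)"]) (auto simp: Sp_def TW_def)
    next
      show "f = (\<lambda>m. \<Sum>i<r. pmul (\<lambda>m. H (i, m)) (Defs.cofactor r Fs i) m)"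
        unfolding H(2) Phi_def by (simp add: sum_fun_apply fun_eq_iff)
    qed
    then show "f \<in> deg_part (I_F r Fs) j" using hf by (auto simp: deg_part_def I_F_def phom_def)
  qed
qed


definition Gsp :: "nat \<Rightarrow> nat \<Rightarrow> (nat \<times> mon \<Rightarrow> 'a::field) set" where
  "Gsp r e = {g. g \<in> Sp ({..<r} \<times> Mon e) \<and> (\<forall>m. (\<Sum>i<r. g (i,m)) = 0)}"

definition Mu :: "nat \<Rightarrow> (nat \<Rightarrow> 'a::comm_ring_1 pol3) \<Rightarrow> (nat \<times> mon \<Rightarrow> 'a) \<Rightarrow> (nat \<times> mon \<Rightarrow> 'a)" where
  "Mu r Fs g = (\<lambda>(i,m). if i < r then pmul (Fs i) (\<lambda>m'. g (i,m')) m else 0)"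

definition rho :: "(nat \<times> mon \<Rightarrow> 'a::field) \<Rightarrow> (nat \<times> mon \<Rightarrow> 'a)" where
  "rho g = (\<lambda>(i,m). if i = 0 then 0 else g (i,m))"

lemma subspace_Gsp: "gv.subspace (Gsp r e)"
  unfolding gv.subspace_def
  by (auto simp: Gsp_def Sp_def gscale_def sum.distrib sum_distrib_left[symmetric])

lemma linear_rho: "Vector_Spaces.linear gscale gscale rho"
  unfolding Vector_Spaces.linear_iff using vs_gscale[where 'i="nat \<times> mon"]
  by (auto simp: rho_def gscale_def fun_eq_iff)

lemma pmul_add_right': "pmul h (\<lambda>m. f m + g m) = pmul h f + pmul h g"
  using pmul_add_right[of h f g] by (simp add: plus_fun_def)

lemma pmul_scale_right': "pmul h (\<lambda>m. c * f m) = (\<lambda>x. c * pmul h f x)"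
  by (simp add: pmul_def sum_distrib_left algebra_simps)

lemma SpD: "f \<in> Sp T \<Longrightarrow> x \<notin> T \<Longrightarrow> f x = 0" by (simp add: Sp_def)

lemma pmul_gscale_right: "pmul f (gscale c g) = gscale c (pmul f g)"
  using pmul_gscale pmul_comm by metis

lemma linear_Mu: "Vector_Spaces.linear gscale gscale (Mu r (Fs :: nat \<Rightarrow> 'a::field pol3))"
proof -
  have add: "Mu r Fs (x + y) = Mu r Fs x + Mu r Fs y" for x y :: "nat \<times> mon \<Rightarrow> 'a"
  proof -
    have "(\<lambda>m. (x + y) (i, m)) = (\<lambda>m. x (i,m)) + (\<lambda>m. y (i,m))" for i by auto
    then show ?thesis by (auto simp: Mu_def pmul_add_right' fun_eq_iff)
  qed
  have sc: "Mu r Fs (gscale c x) = gscale c (Mu r Fs x)" for c and x :: "nat \<times> mon \<Rightarrow> 'a"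
  proof -
    have "(\<lambda>m. gscale c x (i, m)) = gscale c (\<lambda>m. x (i,m))" for i by (auto simp: gscale_def)
    then show ?thesis by (auto simp: Mu_def pmul_scale_right' fun_eq_iff gscale_def)
  qed
  show ?thesis unfolding Vector_Spaces.linear_iff using add sc vs_gscale[where 'i="nat \<times> mon"] by blast
qed

lemma dim_Gsp:
  assumes r: "r \<ge> 1"
  shows "gv.dim (Gsp r e :: (nat \<times> mon \<Rightarrow> 'a::field) set) = (r - 1) * card (Mon e)"
proof -
  have img: "rho ` Gsp r e = (Sp ({1..<r} \<times> Mon e) :: (nat \<times> mon \<Rightarrow> 'a) set)"
  proof
    show "rho ` Gsp r e \<subseteq> Sp ({1..<r} \<times> Mon e)"
      by (auto simp: rho_def Gsp_def Sp_def)
    show "Sp ({1..<r} \<times> Mon e) \<subseteq> rho ` (Gsp r e :: (nat \<times> mon \<Rightarrow> 'a) set)"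
    proof
      fix y :: "nat \<times> mon \<Rightarrow> 'a" assume y: "y \<in> Sp ({1..<r} \<times> Mon e)"
      define g where "g = (\<lambda>(i,m). if i = 0 then - (\<Sum>l\<in>{1..<r}. y (l,m)) else y (i,m))"
      have "g \<in> Gsp r e"
      proof -
        have "g \<in> Sp ({..<r} \<times> Mon e)"
          unfolding Sp_def g_def
        proof (intro CollectI allI impI)
          fix x :: "nat \<times> mon" assume x: "x \<notin> {..<r} \<times> Mon e"
          obtain i m where im: "x = (i,m)" by (cases x)
          show "(case x of (i, m) \<Rightarrow> if i = 0 then - (\<Sum>l\<in>{1..<r}. y (l, m)) else y (i, m)) = 0"
          proof (cases "i = 0")
            case True
            then have "m \<notin> Mon e" using x r im by auto
            have "\<forall>l\<in>{1..<r}. y (l,m) = 0"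
            proof
              fix l assume "l \<in> {1..<r}"
              then have "(l,m) \<notin> {1..<r} \<times> Mon e" using \<open>m \<notin> Mon e\<close> by auto
              then show "y (l,m) = 0" using y unfolding Sp_def by blast
            qed
            then show ?thesis using True im by simp
          next
            case False
            then have "(i,m) \<notin> {1..<r} \<times> Mon e" using x im by auto
            then show ?thesis using SpD[OF y] False im by simp
          qed
        qed
        moreover have "(\<Sum>i<r. g (i,m)) = 0" for m
        proof -
          have "{..<r} = insert 0 {1..<r}" using r by auto
          then show ?thesis by (simp add: g_def)
        qed
        ultimately show ?thesis by (simp add: Gsp_def)
      qed
      moreover have "rho g = y" using y by (auto simp: rho_def g_def fun_eq_iff Sp_def)
      ultimately show "y \<in> rho ` Gsp r e" by blast
    qed
  qed
  have inj: "inj_on rho (gv.span (Gsp r e :: (nat \<times> mon \<Rightarrow> 'a) set))"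
  proof -
    have sp: "gv.span (Gsp r e :: (nat \<times> mon \<Rightarrow> 'a) set) = Gsp r e"
      using subspace_Gsp gv.span_eq_iff by blast
    have "inj_on rho (Gsp r e :: (nat \<times> mon \<Rightarrow> 'a) set)"
    proof (rule inj_onI)
      fix x y :: "nat \<times> mon \<Rightarrow> 'a" assume xy: "x \<in> Gsp r e" "y \<in> Gsp r e" "rho x = rho y"
      show "x = y"
      proof
        fix p :: "nat \<times> mon" obtain i m where p: "p = (i,m)" by (cases p)
        show "x p = y p"
        proof (cases "i = 0")
          case False then show ?thesis using fun_cong[OF xy(3), of p] p by (simp add: rho_def)
        next
          case True
          have ins: "{..<r} = insert 0 {1..<r}" using r by auto
          have "(\<Sum>i<r. x (i,m)) = 0" "(\<Sum>i<r. y (i,m)) = 0" using xy(1,2) unfolding Gsp_def by blast+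
          then have sx: "x (0,m) = - (\<Sum>l\<in>{1..<r}. x (l,m))" and sy: "y (0,m) = - (\<Sum>l\<in>{1..<r}. y (l,m))"
            unfolding ins by (simp_all add: eq_neg_iff_add_eq_0)
          have "(\<Sum>l\<in>{1..<r}. x (l,m)) = (\<Sum>l\<in>{1..<r}. y (l,m))"
          proof (intro sum.cong refl)
            fix l assume "l \<in> {1..<r}"
            then have "l \<noteq> 0" by auto
            then show "x (l,m) = y (l,m)" using fun_cong[OF xy(3), of "(l,m)"] by (simp add: rho_def)
          qed
          then show ?thesis using sx sy True p by simp
        qed
      qed
    qed
    then show ?thesis by (simp only: sp)
  qed
  have "gv.dim (Gsp r e :: (nat \<times> mon \<Rightarrow> 'a) set) = gv.dim (rho ` (Gsp r e :: (nat \<times> mon \<Rightarrow> 'a) set))"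
    using gvp.my_dim_image_eq[OF linear_rho inj] by simp
  also have "\<dots> = card ({1..<r} \<times> Mon e)" using img dim_Sp finite_Mon by (metis finite_SigmaI finite_atLeastLessThan)
  also have "\<dots> = (r - 1) * card (Mon e)" by (simp add: card_cartesian_product)
  finally show ?thesis .
qed


lemma Phi_zero: "Phi r Fs 0 = 0" by (simp add: Phi_def zero_fun_def[symmetric])

lemma ker_eq:
  fixes Fs :: "nat \<Rightarrow> 'a::field pol3"
  assumes g: "good r ds Fs" and d: "d = (\<Sum>l<r. ds l)"
  shows "{H \<in> Sp (TW r ds d j). Phi r Fs H = 0} = (if d \<le> j then Mu r Fs ` Gsp r (j - d) else {0})"
proof
  have dsd: "i < r \<Longrightarrow> ds i \<le> d" for i unfolding d by (rule member_le_sum) auto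
  show "{H \<in> Sp (TW r ds d j). Phi r Fs H = 0} \<subseteq> (if d \<le> j then Mu r Fs ` Gsp r (j - d) else {0})"
  proof
    fix H assume H: "H \<in> {H \<in> Sp (TW r ds d j). Phi r Fs H = 0}"
    have hi: "(if d - ds i \<le> j then phom (\<lambda>m. H (i,m)) (j - (d - ds i)) else (\<lambda>m. H (i,m)) = 0)" if "i < r" for i
    proof (cases "d - ds i \<le> j")
      case True
      have "phom (\<lambda>m. H (i,m)) (j - (d - ds i))" unfolding phom_def
      proof (intro allI impI)
        fix m assume "H (i,m) \<noteq> 0"
        then have "(i,m) \<in> TW r ds d j" using H SpD[of H "TW r ds d j" "(i,m)"] by auto
        then show "mdeg m = j - (d - ds i)" by (simp add: TW_def)
      qed
      then show ?thesis using True by simp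
    next
      case False
      have "(\<lambda>m. H (i,m)) = 0"
      proof
        fix m have "(i,m) \<notin> TW r ds d j" using False by (simp add: TW_def)
        then show "H (i,m) = 0 m" using H SpD by fastforce
      qed
      then show ?thesis using False by simp
    qed
    have z: "(\<Sum>i<r. pmul (\<lambda>m. H (i,m)) (Defs.cofactor r Fs i)) = 0" using H by (simp add: Phi_def)
    obtain gg where gg: "\<forall>i<r. phom (gg i) (j - d) \<and> (\<lambda>m. H (i,m)) = pmul (Fs i) (gg i) \<and> (j < d \<longrightarrow> gg i = 0)"
      "(\<Sum>i<r. gg i) = 0"
      using kernel[OF g d, where h="\<lambda>i m. H (i,m)" and j=j] hi z by blast
    have Hout: "i \<ge> r \<Longrightarrow> H (i,m) = 0" for i m
    proof -
      assume "i \<ge> r" then have "(i,m) \<notin> TW r ds d j" by (simp add: TW_def)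
      then show ?thesis using H SpD by fastforce
    qed
    show "H \<in> (if d \<le> j then Mu r Fs ` Gsp r (j - d) else {0})"
    proof (cases "d \<le> j")
      case False
      have "H = 0"
      proof
        fix p :: "nat \<times> mon" obtain i m where p: "p = (i,m)" by (cases p)
        show "H p = 0 p"
        proof (cases "i < r")
          case True
          then have "(\<lambda>m. H (i,m)) = 0" using gg(1) False by auto
          then show ?thesis using p by (metis zero_fun_def)
        next
          case False then show ?thesis using Hout p by simp
        qed
      qed
      then show ?thesis using False by simp
    next
      case True
      define g' where "g' = (\<lambda>(i,m). if i < r then gg i m else 0)"
      have "g' \<in> Gsp r (j - d)"
        unfolding Gsp_def
      proof (intro CollectI conjI allI)
        show "g' \<in> Sp ({..<r} \<times> Mon (j - d))" unfolding Sp_def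
        proof (intro CollectI allI impI)
          fix x :: "nat \<times> mon" assume x: "x \<notin> {..<r} \<times> Mon (j - d)"
          obtain i m where p: "x = (i,m)" by (cases x)
          show "g' x = 0"
          proof (cases "i < r")
            case True
            then have "m \<notin> Mon (j - d)" using x p by auto
            moreover have "phom (gg i) (j - d)" using gg(1) True by blast
            ultimately have "gg i m = 0" using phomD unfolding Mon_def by blast
            then show ?thesis using True p by (simp add: g'_def)
          qed (simp add: g'_def p)
        qed
        fix m
        have "(\<Sum>i<r. g' (i, m)) = (\<Sum>i<r. gg i) m" by (simp add: g'_def sum_fun_apply)
        then show "(\<Sum>i<r. g' (i, m)) = 0" using gg(2) by simp
      qed
      moreover have "Mu r Fs g' = H"
      proof
        fix p :: "nat \<times> mon" obtain i m where p: "p = (i,m)" by (cases p)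
        show "Mu r Fs g' p = H p"
        proof (cases "i < r")
          case True
          have "(\<lambda>m'. g' (i, m')) = gg i" using True by (simp add: g'_def fun_eq_iff)
          then show ?thesis using True p gg(1) by (auto simp: Mu_def dest!: fun_cong[of _ _ m])
        next
          case False then show ?thesis using Hout p by (simp add: Mu_def)
        qed
      qed
      ultimately show ?thesis using True by auto
    qed
  qed
  show "(if d \<le> j then Mu r Fs ` Gsp r (j - d) else {0}) \<subseteq> {H \<in> Sp (TW r ds d j). Phi r Fs H = 0}"
  proof (cases "d \<le> j")
    case False
    have "(0 :: nat \<times> mon \<Rightarrow> 'a) \<in> Sp (TW r ds d j)" by (simp add: Sp_def)
    then show ?thesis using False Phi_zero[of r Fs] by auto
  next
    case True
    note dj = True
    have "Mu r Fs g \<in> Sp (TW r ds d j) \<and> Phi r Fs (Mu r Fs g) = 0" if gG: "g \<in> Gsp r (j - d)" for g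
    proof
      have gi: "phom (\<lambda>m. g (i,m)) (j - d)" for i unfolding phom_def
      proof (intro allI impI)
        fix m assume "g (i,m) \<noteq> 0"
        have gS: "g \<in> Sp ({..<r} \<times> Mon (j - d))" using gG unfolding Gsp_def by blast
        have "(i,m) \<in> {..<r} \<times> Mon (j - d)"
        proof (rule ccontr)
          assume "(i,m) \<notin> {..<r} \<times> Mon (j - d)"
          then have "g (i,m) = 0" by (rule SpD[OF gS])
          then show False using \<open>g (i,m) \<noteq> 0\<close> by simp
        qed
        then show "mdeg m = j - d" by (simp add: Mon_def)
      qed
      show "Mu r Fs g \<in> Sp (TW r ds d j)" unfolding Sp_def
      proof (intro CollectI allI impI)
        fix x :: "nat \<times> mon" assume x: "x \<notin> TW r ds d j"
        obtain i m where p: "x = (i,m)" by (cases x)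
        show "Mu r Fs g x = 0"
        proof (cases "i < r")
          case True
          have Fi: "phom (Fs i) (ds i)" using g True by (auto simp: good_def)
          have "ds i + (j - d) = j - (d - ds i)" "d - ds i \<le> j" using dj dsd[OF True] by auto
          then have "pmul (Fs i) (\<lambda>m. g (i,m)) m = 0"
            using x p True phomD[OF phom_pmul[OF Fi gi[of i]], of m] by (auto simp: TW_def)
          then show ?thesis using p True by (simp add: Mu_def)
        qed (simp add: Mu_def p)
      qed
      have "Phi r Fs (Mu r Fs g) = (\<Sum>i<r. pmul (pmul (Fs i) (\<lambda>m. g (i,m))) (Defs.cofactor r Fs i))"
        unfolding Phi_def by (intro sum.cong refl) (simp add: Mu_def)
      also have "\<dots> = (\<Sum>i<r. pmul (\<lambda>m. g (i,m)) (Ftot r Fs))"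
      proof (intro sum.cong refl)
        fix i assume "i \<in> {..<r}"
        then have "pmul (Fs i) (Defs.cofactor r Fs i) = Ftot r Fs" by (simp add: cof_F)
        then show "pmul (pmul (Fs i) (\<lambda>m. g (i,m))) (Defs.cofactor r Fs i) = pmul (\<lambda>m. g (i,m)) (Ftot r Fs)"
          by (metis pmul_assoc pmul_comm)
      qed
      also have "\<dots> = pmul (\<Sum>i<r. (\<lambda>m. g (i,m))) (Ftot r Fs)" by (simp add: pmul_sum_left)
      also have "(\<Sum>i<r. (\<lambda>m. g (i,m))) = 0"
      proof
        fix m
        have "(\<Sum>i<r. g (i,m)) = 0" using gG unfolding Gsp_def by blast
        then show "(\<Sum>i<r. (\<lambda>m. g (i,m))) m = 0 m" by (simp add: sum_fun_apply)
      qed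
      finally show "Phi r Fs (Mu r Fs g) = 0" by (metis pmul_zero_left zero_fun_def)
    qed
    then show ?thesis using True by auto
  qed
qed

lemma Mu_inj:
  fixes Fs :: "nat \<Rightarrow> 'a::field pol3"
  assumes g: "good r ds Fs"
  shows "inj_on (Mu r Fs) (gv.span (Gsp r e))"
proof -
  have sp: "gv.span (Gsp r e :: (nat \<times> mon \<Rightarrow> 'a) set) = Gsp r e"
    using subspace_Gsp gv.span_eq_iff by blast
  have "inj_on (Mu r Fs) (Gsp r e)"
  proof (rule inj_onI)
    fix x y :: "nat \<times> mon \<Rightarrow> 'a" assume xy: "x \<in> Gsp r e" "y \<in> Gsp r e" "Mu r Fs x = Mu r Fs y"
    have "Mu r Fs (x - y) = Mu r Fs x - Mu r Fs y" by (rule gvp.linear_diff[OF linear_Mu])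
    then have z: "Mu r Fs (x - y) = 0" using xy(3) by simp
    show "x = y"
    proof
      fix p :: "nat \<times> mon" obtain i m where p: "p = (i,m)" by (cases p)
      show "x p = y p"
      proof (cases "i < r")
        case True
        have "pmul (Fs i) (\<lambda>m. (x - y) (i,m)) = 0"
        proof
          fix m' show "pmul (Fs i) (\<lambda>m. (x - y) (i,m)) m' = 0 m'"
            using fun_cong[OF z, of "(i,m')"] True by (simp add: Mu_def)
        qed
        then have "(\<lambda>m. (x - y) (i,m)) = 0" using pmul_idom good_nz[OF g True] by blast
        then have "(x - y) (i,m) = 0" by (metis zero_fun_def)
        then show ?thesis using p by simp
      next
        case False
        have "p \<notin> {..<r} \<times> Mon e" using False p by auto
        moreover have "x \<in> Sp ({..<r} \<times> Mon e)" "y \<in> Sp ({..<r} \<times> Mon e)" using xy(1,2) unfolding Gsp_def by blast+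
        ultimately show ?thesis using SpD by metis
      qed
    qed
  qed
  then show ?thesis by (simp only: sp)
qed

lemma dim_deg_part:
  fixes Fs :: "nat \<Rightarrow> 'a::field pol3"
  assumes g: "good r ds Fs" and d: "d = (\<Sum>l<r. ds l)" and r: "r \<ge> 1"
  shows "gv.dim (deg_part (I_F r Fs) j) + (if d \<le> j then (r - 1) * card (Mon (j - d)) else 0) = card (TW r ds d j)"
proof -
  have rn: "gv.dim (Phi r Fs ` Sp (TW r ds d j)) + gv.dim {H \<in> Sp (TW r ds d j). Phi r Fs H = 0}
      = gv.dim (Sp (TW r ds d j) :: (nat \<times> mon \<Rightarrow> 'a) set)"
    by (rule gvp.rank_nullity_sub[OF linear_Phi subspace_Sp finite_imageI[OF finite_TW[of r ds d j], of "pdelta :: nat \<times> mon \<Rightarrow> nat \<times> mon \<Rightarrow> 'a"]])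
       (simp add: span_delta[OF finite_TW])
  have dk: "gv.dim {H \<in> Sp (TW r ds d j). Phi r Fs H = 0} = (if d \<le> j then (r - 1) * card (Mon (j - d)) else 0)"
  proof (cases "d \<le> j")
    case True
    have "gv.dim (Mu r Fs ` Gsp r (j - d)) = gv.dim (Gsp r (j - d) :: (nat \<times> mon \<Rightarrow> 'a) set)"
      by (rule gvp.my_dim_image_eq[OF linear_Mu Mu_inj[OF g]])
    then show ?thesis using ker_eq[OF g d, of j] True dim_Gsp[OF r] by simp
  next
    case False
    then show ?thesis using ker_eq[OF g d, of j] gv.dim_eq_card[of "{}" "{0}"] gv.span_insert_0[of "{}"] gv.independent_empty by simp
  qed
  show ?thesis using rn dk deg_part_eq[OF g d, of j] dim_Sp[OF finite_TW] by simp
qed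


lemma Mon_Suc: "Mon (Suc e) = {(0,b,c) | b c. b + c = Suc e} \<union> (\<lambda>(a,b,c). (Suc a, b, c)) ` Mon e"
proof
  show "Mon (Suc e) \<subseteq> {(0,b,c) | b c. b + c = Suc e} \<union> (\<lambda>(a,b,c). (Suc a, b, c)) ` Mon e"
  proof
    fix m assume m: "m \<in> Mon (Suc e)"
    obtain a b c where abc: "m = (a,b,c)" by (cases m)
    show "m \<in> {(0,b,c) | b c. b + c = Suc e} \<union> (\<lambda>(a,b,c). (Suc a, b, c)) ` Mon e"
    proof (cases a)
      case 0 then show ?thesis using m abc by (auto simp: Mon_def mdeg_def)
    next
      case (Suc a')
      then have "(a',b,c) \<in> Mon e" using m abc by (auto simp: Mon_def mdeg_def)
      then show ?thesis using abc Suc by force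
    qed
  qed
  show "{(0,b,c) | b c. b + c = Suc e} \<union> (\<lambda>(a,b,c). (Suc a, b, c)) ` Mon e \<subseteq> Mon (Suc e)"
    by (auto simp: Mon_def mdeg_def)
qed

lemma card_bin: "card {(0::nat,b,c) | b c. b + c = (n::nat)} = Suc n"
proof -
  have "{(0::nat,b,c) | b c. b + c = n} = (\<lambda>c. (0, n - c, c)) ` {0..n}" by force
  moreover have "inj_on (\<lambda>c. (0::nat, n - c, c)) {0..n}" by (auto simp: inj_on_def)
  ultimately show ?thesis by (simp add: card_image)
qed

lemma card_Mon: "card (Mon e) = (e + 2) choose 2"
proof (induction e)
  case 0
  have "Mon 0 = {(0,0,0)}" by (auto simp: Mon_def mdeg_def)
  then show ?case by (simp add: numeral_2_eq_2)
next
  case (Suc e)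
  have disj: "{(0,b,c) | b c. b + c = Suc e} \<inter> (\<lambda>(a,b,c). (Suc a, b, c)) ` Mon e = {}" by auto
  have fin1: "finite {(0::nat,b,c) | b c. b + c = Suc e}"
    by (rule finite_subset[of _ "{0} \<times> {0..Suc e} \<times> {0..Suc e}"]) auto
  have ci: "card ((\<lambda>(a::nat,b::nat,c::nat). (Suc a, b, c)) ` Mon e) = card (Mon e)"
    by (rule card_image) (auto simp: inj_on_def)
  have "card (Mon (Suc e)) = card {(0::nat,b,c) | b c. b + c = Suc e} + card ((\<lambda>(a::nat,b::nat,c::nat). (Suc a, b, c)) ` Mon e)"
    unfolding Mon_Suc using disj fin1 finite_Mon[of e] by (intro card_Un_disjoint) auto
  also have "\<dots> = Suc (Suc e) + card (Mon e)" by (simp only: ci card_bin)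
  also have "\<dots> = (Suc e + 2) choose 2" using Suc by (simp add: numeral_2_eq_2)
  finally show ?case .
qed

lemma two_choose2: "2 * (n choose 2) = n * (n - 1)"
proof (induction n)
  case 0 then show ?case by simp
next
  case (Suc n)
  have "Suc n choose 2 = n + (n choose 2)" by (simp add: numeral_2_eq_2)
  then show ?case using Suc by (cases n) (auto simp: algebra_simps)
qed

lemma D_identity_int:
  fixes ds :: "nat \<Rightarrow> int"
  shows "(\<Sum>i<r. ds i)^2 = (\<Sum>i<r. ds i^2) + 2 * (\<Sum>i<r. \<Sum>j\<in>{i<..<r}. ds i * ds j)"
proof (induction r)
  case 0 then show ?case by simp
next
  case (Suc r)
  have em: "{r<..<Suc r} = {}" by auto
  have "(\<Sum>i<Suc r. \<Sum>j\<in>{i<..<Suc r}. ds i * ds j) = (\<Sum>i<r. \<Sum>j\<in>{i<..<Suc r}. ds i * ds j)"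
    by (simp add: em)
  also have "\<dots> = (\<Sum>i<r. (\<Sum>j\<in>{i<..<r}. ds i * ds j) + ds i * ds r)"
  proof (intro sum.cong refl)
    fix i assume "i \<in> {..<r}"
    then have "{i<..<Suc r} = insert r {i<..<r}" by auto
    then show "(\<Sum>j\<in>{i<..<Suc r}. ds i * ds j) = (\<Sum>j\<in>{i<..<r}. ds i * ds j) + ds i * ds r" by simp
  qed
  also have "\<dots> = (\<Sum>i<r. \<Sum>j\<in>{i<..<r}. ds i * ds j) + (\<Sum>i<r. ds i) * ds r"
    by (simp add: sum.distrib sum_distrib_right)
  finally have e: "(\<Sum>i<Suc r. \<Sum>j\<in>{i<..<Suc r}. ds i * ds j) = (\<Sum>i<r. \<Sum>j\<in>{i<..<r}. ds i * ds j) + (\<Sum>i<r. ds i) * ds r" .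
  show ?case unfolding e using Suc by (simp add: algebra_simps power2_eq_square)
qed

lemma D_identity:
  fixes ds :: "nat \<Rightarrow> nat"
  shows "int (\<Sum>i<r. ds i)^2 = (\<Sum>i<r. int (ds i)^2) + 2 * int (\<Sum>i<r. \<Sum>j\<in>{i<..<r}. ds i * ds j)"
  using D_identity_int[of "\<lambda>i. int (ds i)" r] by simp

lemma choose_identity:
  fixes ds :: "nat \<Rightarrow> nat" and t :: nat
  assumes r: "r \<ge> 1" and d: "d = (\<Sum>i<r. ds i)"
  shows "2 * (int ((t + d) choose 2) - (\<Sum>i<r. int ((t + ds i) choose 2)) + int (r - 1) * int (t choose 2))
       = int d ^ 2 - (\<Sum>i<r. int (ds i)^2)"
proof -
  have c2: "2 * int (n choose 2) = int n * (int n - 1)" for n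
  proof -
    have "int (2 * (n choose 2)) = int (n * (n - 1))" by (simp only: two_choose2)
    then show ?thesis by (cases n) (auto simp: algebra_simps)
  qed
  have "2 * (int ((t + d) choose 2) - (\<Sum>i<r. int ((t + ds i) choose 2)) + int (r - 1) * int (t choose 2))
     = 2 * int ((t + d) choose 2) - (\<Sum>i<r. 2 * int ((t + ds i) choose 2)) + int (r - 1) * (2 * int (t choose 2))"
    by (simp add: algebra_simps sum_distrib_left)
  also have "\<dots> = (int t + int d) * (int t + int d - 1) - (\<Sum>i<r. (int t + int (ds i)) * (int t + int (ds i) - 1))
       + (int r - 1) * (int t * (int t - 1))"
    using r by (simp only: c2 of_nat_add of_nat_diff) simp
  also have "(\<Sum>i<r. (int t + int (ds i)) * (int t + int (ds i) - 1))
     = int r * (int t * (int t - 1)) + (2 * int t - 1) * (\<Sum>i<r. int (ds i)) + (\<Sum>i<r. int (ds i)^2)"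
    by (simp add: algebra_simps sum.distrib sum_distrib_left sum_subtractf power2_eq_square)
  also have "(\<Sum>i<r. int (ds i)) = int d" using d by simp
  finally show ?thesis by (simp add: algebra_simps power2_eq_square)
qed


lemma card_TW: "card (TW r ds d j) = (\<Sum>i<r. if d - ds i \<le> j then card (Mon (j - (d - ds i))) else 0)"
proof -
  have "TW r ds d j = Sigma {i \<in> {..<r}. d - ds i \<le> j} (\<lambda>i. Mon (j - (d - ds i)))"
    by (auto simp: TW_def Mon_def)
  then have "card (TW r ds d j) = (\<Sum>i\<in>{i \<in> {..<r}. d - ds i \<le> j}. card (Mon (j - (d - ds i))))"
    by (simp add: card_SigmaI finite_Mon)
  also have "\<dots> = (\<Sum>i<r. if d - ds i \<le> j then card (Mon (j - (d - ds i))) else 0)"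
    by (rule sum.inter_filter) simp
  finally show ?thesis .
qed

lemma dim_le_card:
  fixes Fs :: "nat \<Rightarrow> 'a::field pol3"
  shows "gv.dim (deg_part (I_F r Fs) j) \<le> card (Mon j)"
proof -
  have "deg_part (I_F r Fs) j \<subseteq> Sp (Mon j)" by (auto simp: deg_part_def Sp_def Mon_def)
  moreover have "gv.span ((pdelta :: mon \<Rightarrow> mon \<Rightarrow> 'a) ` Mon j) = Sp (Mon j)" by (rule span_delta[OF finite_Mon])
  ultimately have "deg_part (I_F r Fs) j \<subseteq> gv.span ((pdelta :: mon \<Rightarrow> mon \<Rightarrow> 'a) ` Mon j)"
    by simp
  then have "gv.dim (deg_part (I_F r Fs) j) \<le> card ((pdelta :: mon \<Rightarrow> mon \<Rightarrow> 'a) ` Mon j)"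
    by (rule gv.dim_le_card) (simp add: finite_Mon)
  also have "\<dots> \<le> card (Mon j)" by (rule card_image_le[OF finite_Mon])
  finally show ?thesis .
qed

lemma hilbert_good:
  fixes Fs :: "nat \<Rightarrow> 'a::field pol3" and r :: nat and ds :: "nat \<Rightarrow> nat" and d D :: nat
  assumes g: "good r ds Fs" and r: "r \<ge> 2" and ds1: "\<forall>i<r. ds i \<ge> 1"
    and d: "d = (\<Sum>i<r. ds i)"
    and D: "D = (\<Sum>i<r. \<Sum>j\<in>{i<..<r}. ds i * ds j)"
  shows "(\<forall>j. d \<le> j + 2 \<longrightarrow> hilbert_quot (I_F r Fs) j = D) \<and>
           (\<forall>j. j + 1 \<le> d \<longrightarrow>
              int (hilbert_quot (I_F r Fs) j) =
                int ((j + 2) choose 2)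
                - (\<Sum>i<r. int (nat (max (int j - int d + int (ds i)) (-1) + 2) choose 2)))"
proof -
  have r1: "r \<ge> 1" using r by simp
  have dsd: "i < r \<Longrightarrow> ds i \<le> d" for i unfolding d by (rule member_le_sum) auto
  have HQ: "int (hilbert_quot (I_F r Fs) j) = int (card (Mon j)) - int (gv.dim (deg_part (I_F r Fs) j))" for j
  proof -
    have "hilbert_quot (I_F r Fs) j = card (Mon j) - gv.dim (deg_part (I_F r Fs) j)"
      by (simp add: hilbert_quot_def fscale_gscale Mon_def)
    then show ?thesis using dim_le_card[of r Fs j] by simp
  qed
  have DIM: "int (gv.dim (deg_part (I_F r Fs) j)) =
      (\<Sum>i<r. if d - ds i \<le> j then int (card (Mon (j - (d - ds i)))) else 0)
      - (if d \<le> j then int (r - 1) * int (card (Mon (j - d))) else 0)" for j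
  proof -
    have "int (gv.dim (deg_part (I_F r Fs) j)) + int (if d \<le> j then (r - 1) * card (Mon (j - d)) else 0) = int (card (TW r ds d j))"
      using dim_deg_part[OF g d r1, of j] by presburger
    then show ?thesis unfolding card_TW by (simp add: of_nat_sum if_distrib[of int] cong: if_cong)
  qed
  show ?thesis
  proof (intro conjI allI impI)
    fix j assume j: "j + 1 \<le> d"
    have "int (hilbert_quot (I_F r Fs) j) = int ((j + 2) choose 2) - (\<Sum>i<r. if d - ds i \<le> j then int (card (Mon (j - (d - ds i)))) else 0)"
      using HQ[of j] DIM[of j] j by (simp add: card_Mon)
    also have "(\<Sum>i<r. if d - ds i \<le> j then int (card (Mon (j - (d - ds i)))) else 0)
        = (\<Sum>i<r. int (nat (max (int j - int d + int (ds i)) (-1) + 2) choose 2))"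
    proof (intro sum.cong refl)
      fix i assume i: "i \<in> {..<r}"
      have di: "ds i \<le> d" using dsd i by simp
      show "(if d - ds i \<le> j then int (card (Mon (j - (d - ds i)))) else 0) = int (nat (max (int j - int d + int (ds i)) (-1) + 2) choose 2)"
      proof (cases "d - ds i \<le> j")
        case True
        then have "nat (max (int j - int d + int (ds i)) (-1) + 2) = j - (d - ds i) + 2" using di by auto
        then show ?thesis using True by (simp add: card_Mon)
      next
        case False
        then have "nat (max (int j - int d + int (ds i)) (-1) + 2) = 1" using di by auto
        then show ?thesis using False by simp
      qed
    qed
    finally show "int (hilbert_quot (I_F r Fs) j) = int ((j + 2) choose 2) - (\<Sum>i<r. int (nat (max (int j - int d + int (ds i)) (-1) + 2) choose 2))" .
  next
    fix j assume j: "d \<le> j + 2"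
    define t where "t = j + 2 - d"
    have jt: "j + 2 = t + d" using j by (simp add: t_def)
    have "int (hilbert_quot (I_F r Fs) j) = int ((t + d) choose 2) - (\<Sum>i<r. int ((t + ds i) choose 2)) + int (r - 1) * int (t choose 2)"
    proof -
      have s: "(\<Sum>i<r. if d - ds i \<le> j then int (card (Mon (j - (d - ds i)))) else 0) = (\<Sum>i<r. int ((t + ds i) choose 2))"
      proof (intro sum.cong refl)
        fix i assume i: "i \<in> {..<r}"
        have di: "ds i \<le> d" "ds i \<ge> 1" using dsd ds1 i by auto
        show "(if d - ds i \<le> j then int (card (Mon (j - (d - ds i)))) else 0) = int ((t + ds i) choose 2)"
        proof (cases "d - ds i \<le> j")
          case True
          then have "j - (d - ds i) + 2 = t + ds i" using di jt by auto
          then show ?thesis using True by (simp add: card_Mon)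
        next
          case False
          then have "t + ds i = 1" using di jt by auto
          then show ?thesis using False by simp
        qed
      qed
      have k: "(if d \<le> j then int (r - 1) * int (card (Mon (j - d))) else 0) = int (r - 1) * int (t choose 2)"
      proof (cases "d \<le> j")
        case True
        then have "j - d + 2 = t" using jt by auto
        then show ?thesis using True by (simp add: card_Mon)
      next
        case False
        then have "t \<le> 1" using jt by auto
        then have "t choose 2 = 0" by simp
        then show ?thesis using False by simp
      qed
      show ?thesis using HQ[of j] DIM[of j] s k jt by (simp add: card_Mon)
    qed
    then have "2 * int (hilbert_quot (I_F r Fs) j) = int d ^ 2 - (\<Sum>i<r. int (ds i)^2)"
      using choose_identity[OF r1 d, of t] by simp
    also have "\<dots> = 2 * int D" using D_identity[of ds r] d D by simp
    finally show "hilbert_quot (I_F r Fs) j = D" by simp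
  qed
qed


definition syl :: "nat \<Rightarrow> nat \<Rightarrow> 'a::field poly \<Rightarrow> 'a poly \<Rightarrow> 'a mat" where
  "syl p q a b = mat (p+q) (p+q) (\<lambda>(k,s). if s < q then (if s \<le> k then coeff a (k - s) else 0)
                                          else (if s - q \<le> k then coeff b (k - (s - q)) else 0))"

definition Uw :: "nat \<Rightarrow> 'a::field vec \<Rightarrow> 'a poly" where
  "Uw q w = (\<Sum>s<q. monom (w $ s) s)"
definition Vw :: "nat \<Rightarrow> nat \<Rightarrow> 'a::field vec \<Rightarrow> 'a poly" where
  "Vw p q w = (\<Sum>s<p. monom (w $ (q + s)) s)"

lemma syl_carrier: "syl p q a b \<in> carrier_mat (p+q) (p+q)"
  by (simp add: syl_def)

lemma coeff_Uw: "coeff (Uw q w) s = (if s < q then w $ s else 0)"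
  by (simp add: Uw_def coeff_sum coeff_monom)
lemma coeff_Vw: "coeff (Vw p q w) s = (if s < p then w $ (q + s) else 0)"
  by (simp add: Vw_def coeff_sum coeff_monom)

lemma degree_Uw: "degree (Uw q w) < q \<or> Uw q w = 0"
proof (cases "Uw q w = 0")
  case False
  have "degree (Uw q w) \<le> q - 1" by (rule degree_le) (auto simp: coeff_Uw)
  moreover have "q > 0"
  proof (rule ccontr)
    assume "\<not> q > 0" then have "q = 0" by simp
    then show False using False by (simp add: Uw_def)
  qed
  ultimately show ?thesis by auto
qed simp

lemma degree_Vw: "degree (Vw p q w) < p \<or> Vw p q w = 0"
proof (cases "Vw p q w = 0")
  case False
  have "degree (Vw p q w) \<le> p - 1" by (rule degree_le) (auto simp: coeff_Vw)
  moreover have "p > 0"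
  proof (rule ccontr)
    assume "\<not> p > 0" then have "p = 0" by simp
    then show False using False by (simp add: Vw_def)
  qed
  ultimately show ?thesis by auto
qed simp

lemma syl_mult:
  fixes a b :: "'a::field poly"
  assumes w: "w \<in> carrier_vec (p+q)" and k: "k < p + q"
  shows "(syl p q a b *\<^sub>v w) $ k = coeff (Uw q w * a + Vw p q w * b) k"
proof -
  have "(syl p q a b *\<^sub>v w) $ k = (\<Sum>s\<in>{0..<p+q}. syl p q a b $$ (k, s) * w $ s)"
    using k w by (simp add: scalar_prod_def syl_def)
  also have "\<dots> = (\<Sum>s\<in>{0..<q}. syl p q a b $$ (k, s) * w $ s) + (\<Sum>s\<in>{q..<p+q}. syl p q a b $$ (k, s) * w $ s)"
    by (subst sum.atLeastLessThan_concat[symmetric]) auto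
  also have "(\<Sum>s\<in>{0..<q}. syl p q a b $$ (k, s) * w $ s) = coeff (Uw q w * a) k"
  proof -
    have "coeff (Uw q w * a) k = (\<Sum>s<q. coeff (monom (w $ s) s * a) k)"
      by (simp add: Uw_def sum_distrib_right coeff_sum)
    also have "\<dots> = (\<Sum>s\<in>{0..<q}. syl p q a b $$ (k, s) * w $ s)"
      using k by (intro sum.cong) (auto simp: coeff_monom_mult syl_def atLeast0LessThan)
    finally show ?thesis by simp
  qed
  also have "(\<Sum>s\<in>{q..<p+q}. syl p q a b $$ (k, s) * w $ s) = coeff (Vw p q w * b) k"
  proof -
    have "coeff (Vw p q w * b) k = (\<Sum>s<p. coeff (monom (w $ (q + s)) s * b) k)"
      by (simp add: Vw_def sum_distrib_right coeff_sum)
    also have "\<dots> = (\<Sum>s\<in>{0..<p}. syl p q a b $$ (k, q + s) * w $ (q + s))"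
      using k by (intro sum.cong) (auto simp: coeff_monom_mult syl_def atLeast0LessThan)
    also have "\<dots> = (\<Sum>s\<in>{q..<p+q}. syl p q a b $$ (k, s) * w $ s)"
      using sum.shift_bounds_nat_ivl[of "\<lambda>s. syl p q a b $$ (k,s) * w $ s" 0 q p] by (simp add: add.commute)
    finally show ?thesis by simp
  qed
  finally show ?thesis by simp
qed

lemma degree_UV:
  fixes a b :: "'a::field poly"
  assumes "degree a \<le> p" "degree b \<le> q"
  shows "degree (Uw q w * a + Vw p q w * b) < p + q \<or> Uw q w * a + Vw p q w * b = 0"
proof -
  have "degree (Uw q w * a) < p + q \<or> Uw q w * a = 0"
    using degree_Uw[of q w] assms(1) degree_mult_le[of "Uw q w" a] by fastforce
  moreover have "degree (Vw p q w * b) < p + q \<or> Vw p q w * b = 0"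
    using degree_Vw[of p q w] assms(2) degree_mult_le[of "Vw p q w" b] by fastforce
  ultimately show ?thesis
  proof (elim disjE)
    assume "degree (Uw q w * a) < p + q" "degree (Vw p q w * b) < p + q"
    then show ?thesis using degree_add_le_max[of "Uw q w * a" "Vw p q w * b"] by auto
  qed auto
qed

lemma syl_bezout:
  fixes a b :: "'a::field poly"
  assumes da: "degree a \<le> p" and db: "degree b \<le> q" and pq: "p + q > 0"
    and det: "det (syl p q a b) \<noteq> 0"
  shows "\<exists>u v. u * a + v * b = 1"
proof -
  let ?S = "syl p q a b" and ?n = "p + q"
  define y :: "'a vec" where "y = unit_vec ?n 0"
  define w where "w = (1 / det ?S) \<cdot>\<^sub>v (adj_mat ?S *\<^sub>v y)"
  have S: "?S \<in> carrier_mat ?n ?n" by (rule syl_carrier)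
  have adj: "adj_mat ?S \<in> carrier_mat ?n ?n" "?S * adj_mat ?S = det ?S \<cdot>\<^sub>m 1\<^sub>m ?n"
    using adj_mat[OF S] by auto
  have yc: "y \<in> carrier_vec ?n" by (simp add: y_def)
  have wc: "w \<in> carrier_vec ?n" using adj yc by (simp add: w_def)
  have "?S *\<^sub>v w = (1 / det ?S) \<cdot>\<^sub>v (?S *\<^sub>v (adj_mat ?S *\<^sub>v y))"
    unfolding w_def by (rule mult_mat_vec[OF S]) (use adj yc in simp)
  also have "?S *\<^sub>v (adj_mat ?S *\<^sub>v y) = (det ?S \<cdot>\<^sub>m 1\<^sub>m ?n) *\<^sub>v y"
    using assoc_mult_mat_vec[OF S adj(1) yc] adj(2) by simp
  also have "(det ?S \<cdot>\<^sub>m 1\<^sub>m ?n) *\<^sub>v y = det ?S \<cdot>\<^sub>v y"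
  proof (rule eq_vecI)
    fix i assume i: "i < dim_vec (det ?S \<cdot>\<^sub>v y)"
    then have i': "i < ?n" using yc by simp
    have "(\<Sum>ia = 0..<?n. det ?S * (if ia = i then 1 else 0) * y $ ia) = (\<Sum>ia = 0..<?n. if ia = i then det ?S * y $ ia else 0)"
      by (intro sum.cong) auto
    also have "\<dots> = det ?S * y $ i" using i' by simp
    finally show "((det ?S \<cdot>\<^sub>m 1\<^sub>m ?n) *\<^sub>v y) $ i = (det ?S \<cdot>\<^sub>v y) $ i"
      using i' yc by (simp add: scalar_prod_def)
  qed (use yc in simp)
  finally have Sw: "?S *\<^sub>v w = y" using det by (auto simp: vec_eq_iff)
  have "Uw q w * a + Vw p q w * b = 1"
  proof (rule poly_eqI)
    fix k
    show "coeff (Uw q w * a + Vw p q w * b) k = coeff 1 k"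
    proof (cases "k < ?n")
      case True
      have "coeff (Uw q w * a + Vw p q w * b) k = (?S *\<^sub>v w) $ k" using syl_mult[OF wc True] by simp
      also have "\<dots> = y $ k" using Sw by simp
      finally show ?thesis using True pq by (simp add: y_def coeff_1 index_unit_vec)
    next
      case False
      then have "degree (Uw q w * a + Vw p q w * b) < k \<or> Uw q w * a + Vw p q w * b = 0"
        using degree_UV[OF da db, of w] by auto
      then have "coeff (Uw q w * a + Vw p q w * b) k = 0" by (metis coeff_0 coeff_eq_0)
      moreover have "k \<noteq> 0" using False pq by auto
      ultimately show ?thesis by (simp del: coeff_add add: coeff_1)
    qed
  qed
  then show ?thesis by blast
qed

lemma syl_det_nz:
  fixes a b :: "'a::field poly"
  assumes da: "degree a \<le> p" and db: "degree b \<le> q" and a0: "a \<noteq> 0"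
    and cop: "\<And>U V. U * a + V * b = 0 \<Longrightarrow> (degree V < p \<or> V = 0) \<Longrightarrow> V = 0"
  shows "det (syl p q a b) \<noteq> 0"
proof
  assume "det (syl p q a b) = 0"
  then obtain w where w: "w \<in> carrier_vec (p+q)" "w \<noteq> 0\<^sub>v (p+q)" "syl p q a b *\<^sub>v w = 0\<^sub>v (p+q)"
    using det_0_iff_vec_prod_zero_field[OF syl_carrier] by blast
  have z: "Uw q w * a + Vw p q w * b = 0"
  proof (rule poly_eqI)
    fix k show "coeff (Uw q w * a + Vw p q w * b) k = coeff 0 k"
    proof (cases "k < p + q")
      case True
      have "(syl p q a b *\<^sub>v w) $ k = 0" using w(3) True by simp
      then show ?thesis using syl_mult[OF w(1) True, of a b] by simp
    next
      case False
      then have "degree (Uw q w * a + Vw p q w * b) < k \<or> Uw q w * a + Vw p q w * b = 0"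
        using degree_UV[OF da db, of w] by auto
      then have "coeff (Uw q w * a + Vw p q w * b) k = 0" by (metis coeff_0 coeff_eq_0)
      then show ?thesis by (simp del: coeff_add)
    qed
  qed
  then have V0: "Vw p q w = 0" using cop degree_Vw by blast
  then have "Uw q w = 0" using z a0 by simp
  have "w = 0\<^sub>v (p+q)"
  proof (rule eq_vecI)
    fix i assume "i < dim_vec (0\<^sub>v (p+q) :: 'a vec)"
    then have i: "i < p + q" by simp
    show "w $ i = 0\<^sub>v (p+q) $ i"
    proof (cases "i < q")
      case True
      then show ?thesis using \<open>Uw q w = 0\<close> coeff_Uw[of q w i] i by simp
    next
      case False
      then have "i - q < p" "q + (i - q) = i" using i by auto
      then show ?thesis using V0 coeff_Vw[of p q w "i - q"] i by simp
    qed
  qed (use w in simp)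
  then show False using w(2) by simp
qed


definition mon_ev :: "('v \<Rightarrow>\<^sub>0 nat) \<Rightarrow> ('v \<Rightarrow> 'a::comm_ring_1) \<Rightarrow> 'a" where
  "mon_ev e x = (\<Prod>v\<in>Poly_Mapping.keys e. x v ^ Poly_Mapping.lookup e v)"

lemma mpeval_mon: "mpeval G x = (\<Sum>e\<in>Poly_Mapping.keys G. Poly_Mapping.lookup G e * mon_ev e x)"
  by (simp add: mpeval_def mon_ev_def)

lemma mon_ev_superset:
  assumes "finite V" "Poly_Mapping.keys e \<subseteq> V"
  shows "mon_ev e x = (\<Prod>v\<in>V. x v ^ Poly_Mapping.lookup e v)"
  unfolding mon_ev_def
  by (rule prod.mono_neutral_left[OF assms(1) assms(2)]) (auto simp: in_keys_iff)

lemma mon_ev_add: "mon_ev (e1 + e2) x = mon_ev e1 x * mon_ev e2 x"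
proof -
  let ?V = "Poly_Mapping.keys e1 \<union> Poly_Mapping.keys e2"
  have "mon_ev (e1 + e2) x = (\<Prod>v\<in>?V. x v ^ Poly_Mapping.lookup (e1 + e2) v)"
    by (rule mon_ev_superset) (use keys_add[of e1 e2] in auto)
  also have "\<dots> = (\<Prod>v\<in>?V. x v ^ Poly_Mapping.lookup e1 v) * (\<Prod>v\<in>?V. x v ^ Poly_Mapping.lookup e2 v)"
    by (simp add: lookup_add power_add prod.distrib)
  also have "\<dots> = mon_ev e1 x * mon_ev e2 x"
    by (simp add: mon_ev_superset[symmetric])
  finally show ?thesis .
qed

lemma mpeval_superset:
  assumes "finite E" "Poly_Mapping.keys G \<subseteq> E"
  shows "mpeval G x = (\<Sum>e\<in>E. Poly_Mapping.lookup G e * mon_ev e x)"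
  unfolding mpeval_mon
  by (rule sum.mono_neutral_left[OF assms(1) assms(2)]) (auto simp: in_keys_iff)

lemma mpeval_add: "mpeval (G1 + G2) x = mpeval G1 x + mpeval G2 x"
proof -
  let ?E = "Poly_Mapping.keys G1 \<union> Poly_Mapping.keys G2"
  have "mpeval (G1 + G2) x = (\<Sum>e\<in>?E. Poly_Mapping.lookup (G1 + G2) e * mon_ev e x)"
    by (rule mpeval_superset) (use keys_add[of G1 G2] in auto)
  also have "\<dots> = (\<Sum>e\<in>?E. Poly_Mapping.lookup G1 e * mon_ev e x) + (\<Sum>e\<in>?E. Poly_Mapping.lookup G2 e * mon_ev e x)"
    by (simp add: lookup_add algebra_simps sum.distrib)
  also have "\<dots> = mpeval G1 x + mpeval G2 x"
    by (simp add: mpeval_superset[symmetric])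
  finally show ?thesis .
qed

lemma mpeval_zero[simp]: "mpeval 0 x = 0" by (simp add: mpeval_def)

lemma mpeval_single: "mpeval (Poly_Mapping.single e a) x = a * mon_ev e x"
  by (simp add: mpeval_mon)

lemma mpeval_sum: "mpeval (\<Sum>i\<in>I. G i) x = (\<Sum>i\<in>I. mpeval (G i) x)"
proof (induction I rule: infinite_finite_induct)
  case (insert i I) then show ?case by (simp add: mpeval_add)
qed auto

definition varsok :: "('v \<Rightarrow> bool) \<Rightarrow> ('v, 'a::zero) mpoly \<Rightarrow> bool" where
  "varsok P G \<longleftrightarrow> (\<forall>e\<in>Poly_Mapping.keys G. \<forall>v\<in>Poly_Mapping.keys e. P v)"

definition ppf :: "('v \<Rightarrow> bool) \<Rightarrow> (('v \<Rightarrow> 'a::comm_ring_1) \<Rightarrow> 'a) \<Rightarrow> bool" where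
  "ppf P f \<longleftrightarrow> (\<exists>G. varsok P G \<and> (\<forall>x. mpeval G x = f x))"

lemma ppf_const: "ppf P (\<lambda>x. a)"
  unfolding ppf_def
  by (intro exI[of _ "Poly_Mapping.single 0 a"]) (auto simp: varsok_def mpeval_single mon_ev_def)

lemma ppf_var: "P v \<Longrightarrow> ppf P (\<lambda>x. x v)"
  unfolding ppf_def
  by (intro exI[of _ "Poly_Mapping.single (Poly_Mapping.single v 1) 1"])
     (auto simp: varsok_def mpeval_single mon_ev_def)

lemma varsok_add: assumes "varsok P G1" "varsok P G2" shows "varsok P (G1 + G2)"
  unfolding varsok_def
proof (intro ballI)
  fix e v assume e: "e \<in> Poly_Mapping.keys (G1 + G2)" and v: "v \<in> Poly_Mapping.keys e"
  from e have "e \<in> Poly_Mapping.keys G1 \<or> e \<in> Poly_Mapping.keys G2" using keys_add[of G1 G2] by auto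
  then show "P v" using assms v unfolding varsok_def by auto
qed

lemma ppf_add: assumes "ppf P f" "ppf P g" shows "ppf P (\<lambda>x. f x + g x)"
proof -
  obtain G1 where G1: "varsok P G1" "\<And>x. mpeval G1 x = f x" using assms(1) by (auto simp: ppf_def)
  obtain G2 where G2: "varsok P G2" "\<And>x. mpeval G2 x = g x" using assms(2) by (auto simp: ppf_def)
  show ?thesis unfolding ppf_def
    by (intro exI[of _ "G1 + G2"] conjI varsok_add[OF G1(1) G2(1)] allI) (simp add: mpeval_add G1(2) G2(2))
qed

lemma varsok_sum: assumes "\<And>i. i \<in> I \<Longrightarrow> varsok P (G i)" shows "varsok P (\<Sum>i\<in>I. G i)"
  unfolding varsok_def
proof (intro ballI)
  fix e v assume e: "e \<in> Poly_Mapping.keys (\<Sum>i\<in>I. G i)" and v: "v \<in> Poly_Mapping.keys e"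
  from e obtain i where "i \<in> I" "e \<in> Poly_Mapping.keys (G i)" using keys_sum[of G I] by auto
  then show "P v" using assms v unfolding varsok_def by auto
qed

lemma ppf_mult: assumes "ppf P f" "ppf P g" shows "ppf P (\<lambda>x. f x * g x)"
proof -
  obtain G1 where G1: "varsok P G1" "\<And>x. mpeval G1 x = f x" using assms(1) by (auto simp: ppf_def)
  obtain G2 where G2: "varsok P G2" "\<And>x. mpeval G2 x = g x" using assms(2) by (auto simp: ppf_def)
  define G where "G = (\<Sum>e1\<in>Poly_Mapping.keys G1. \<Sum>e2\<in>Poly_Mapping.keys G2.
      Poly_Mapping.single (e1 + e2) (Poly_Mapping.lookup G1 e1 * Poly_Mapping.lookup G2 e2))"
  have "varsok P G"
    unfolding G_def
  proof (intro varsok_sum)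
    fix e1 e2 assume e: "e1 \<in> Poly_Mapping.keys G1" "e2 \<in> Poly_Mapping.keys G2"
    show "varsok P (Poly_Mapping.single (e1 + e2) (Poly_Mapping.lookup G1 e1 * Poly_Mapping.lookup G2 e2))"
      unfolding varsok_def
    proof (intro ballI)
      fix e v assume "e \<in> Poly_Mapping.keys (Poly_Mapping.single (e1 + e2) (Poly_Mapping.lookup G1 e1 * Poly_Mapping.lookup G2 e2))"
        and v: "v \<in> Poly_Mapping.keys e"
      then have "e = e1 + e2" by (simp split: if_splits)
      then have "v \<in> Poly_Mapping.keys e1 \<or> v \<in> Poly_Mapping.keys e2" using v keys_add[of e1 e2] by auto
      then show "P v" using G1(1) G2(1) e unfolding varsok_def by auto
    qed
  qed
  moreover have "mpeval G x = f x * g x" for x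
  proof -
    have "mpeval G x = (\<Sum>e1\<in>Poly_Mapping.keys G1. \<Sum>e2\<in>Poly_Mapping.keys G2.
         (Poly_Mapping.lookup G1 e1 * mon_ev e1 x) * (Poly_Mapping.lookup G2 e2 * mon_ev e2 x))"
      unfolding G_def by (simp add: mpeval_sum mpeval_single mon_ev_add algebra_simps)
    also have "\<dots> = mpeval G1 x * mpeval G2 x"
      by (simp add: mpeval_mon sum_product)
    finally show ?thesis using G1(2) G2(2) by simp
  qed
  ultimately show ?thesis unfolding ppf_def by blast
qed

lemma ppf_sum: "(\<And>i. i \<in> I \<Longrightarrow> ppf P (f i)) \<Longrightarrow> ppf P (\<lambda>x. \<Sum>i\<in>I. f i x)"
proof (induction I rule: infinite_finite_induct)
  case (infinite A) then show ?case by (simp add: ppf_const)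
next
  case empty then show ?case by (simp add: ppf_const)
next
  case (insert i I) then show ?case by (simp add: ppf_add)
qed

lemma ppf_prod: "(\<And>i. i \<in> I \<Longrightarrow> ppf P (f i)) \<Longrightarrow> ppf P (\<lambda>x. \<Prod>i\<in>I. f i x)"
proof (induction I rule: infinite_finite_induct)
  case (infinite A) then show ?case by (simp add: ppf_const)
next
  case empty then show ?case by (simp add: ppf_const)
next
  case (insert i I) then show ?case by (simp add: ppf_mult)
qed

lemma ppf_det:
  assumes M: "\<And>x. M x \<in> carrier_mat n n" and E: "\<And>i j. i < n \<Longrightarrow> j < n \<Longrightarrow> ppf P (\<lambda>x. M x $$ (i,j))"
  shows "ppf P (\<lambda>x. det (M x))"
proof -
  have "det (M x) = (\<Sum>p\<in>{p. p permutes {0..<n}}. signof p * (\<Prod>i = 0..<n. M x $$ (i, p i)))" for x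
    using det_def'[OF M] by simp
  moreover have "ppf P (\<lambda>x. \<Sum>p\<in>{p. p permutes {0..<n}}. signof p * (\<Prod>i = 0..<n. M x $$ (i, p i)))"
  proof (rule ppf_sum)
    fix p assume p: "p \<in> {p. p permutes {0..<n}}"
    show "ppf P (\<lambda>x. signof p * (\<Prod>i = 0..<n. M x $$ (i, p i)))"
    proof (rule ppf_mult[OF ppf_const ppf_prod])
      fix i assume i: "i \<in> {0..<n}"
      then have "p i < n" using p permutes_in_image by fastforce
      then show "ppf P (\<lambda>x. M x $$ (i, p i))" using E i by simp
    qed
  qed
  ultimately show ?thesis by simp
qed


lemma infinite_alg_closed: "infinite (UNIV :: 'a::alg_closed_field set)"
proof
  assume fin: "finite (UNIV :: 'a set)"
  define Q :: "'a poly" where "Q = (\<Prod>a\<in>UNIV. [:-a, 1:])"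
  have dQ: "degree Q = card (UNIV :: 'a set)"
    unfolding Q_def by (subst degree_prod_eq_sum_degree) auto
  have "card (UNIV :: 'a set) > 0" using fin by (simp add: card_gt_0_iff)
  then have "degree (Q + 1) = degree Q" using dQ by (intro degree_add_eq_left) simp
  then have "degree (Q + 1) > 0" using dQ \<open>card (UNIV :: 'a set) > 0\<close> by simp
  then obtain x where x: "poly (Q + 1) x = 0" using alg_closed_imp_poly_has_root by blast
  have "poly Q x = 0" unfolding Q_def poly_prod
    by (intro prod_zero fin) (auto intro: bexI[of _ x])
  then show False using x by simp
qed

lemma cop_lin:
  fixes U V :: "'a::field poly"
  assumes st: "s \<noteq> t" and eq: "U * [:-s,1:]^p + V * [:-t,1:]^q = 0" and dV: "degree V < p \<or> V = 0"
  shows "V = 0"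
proof (rule ccontr)
  assume V0: "V \<noteq> 0"
  let ?A = "[:-s,1:]^p" and ?B = "[:-t,1:]^q"
  have B0: "?B \<noteq> 0" by simp
  have VB: "V * ?B = ?A * (- U)" using eq by (simp add: algebra_simps eq_neg_iff_add_eq_0)
  then have "?A dvd V * ?B" by simp
  moreover have VB0: "V * ?B \<noteq> 0" using V0 B0 by simp
  ultimately have "p \<le> order s (V * ?B)" using order_divides by blast
  moreover have "order s (V * ?B) = order s V + order s ?B" using order_mult[OF VB0] .
  moreover have "order s ?B = 0"
  proof -
    have "poly ?B s \<noteq> 0" using st by simp
    then show ?thesis using order_root by blast
  qed
  ultimately have "p \<le> order s V" by simp
  then have "?A dvd V" using order_divides by blast
  then have "degree ?A \<le> degree V" using dvd_imp_degree_le V0 by blast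
  then show False using dV V0 by (simp add: degree_linear_power)
qed

lemma ppf_if: "(b \<Longrightarrow> ppf P f) \<Longrightarrow> (\<not> b \<Longrightarrow> ppf P g) \<Longrightarrow> ppf P (\<lambda>x. if b then f x else g x)"
  by (cases b) auto

definition abar :: "(nat \<Rightarrow> nat) \<Rightarrow> (nat \<times> mon \<Rightarrow> 'a::field) \<Rightarrow> nat \<Rightarrow> 'a poly" where
  "abar ds c i = dh (ds i) (pres (forms_of ds c i))"

lemma coeff_abar: "coeff (abar ds c i) k = (if k \<le> ds i then c (i, (0, ds i - k, k)) else 0)"
  by (simp add: abar_def coeff_dh pres_def forms_of_def form_of_def mdeg_def)

lemma degree_abar: "degree (abar ds c i) \<le> ds i"
  unfolding abar_def by (rule degree_dh)

lemma phom_forms: "phom (forms_of ds c i) (ds i)"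
  by (simp add: phom_def forms_of_def form_of_def)

lemma lead_forms: "forms_of ds c i (0,0,ds i) = c (i,(0,0,ds i))"
  by (simp add: forms_of_def form_of_def mdeg_def)

definition Pairs :: "nat \<Rightarrow> (nat \<times> nat) set" where
  "Pairs r = {(i,l). i < l \<and> l < r}"

lemma finite_Pairs: "finite (Pairs r)"
  by (rule finite_subset[of _ "{..<r} \<times> {..<r}"]) (auto simp: Pairs_def)

definition gfun :: "nat \<Rightarrow> (nat \<Rightarrow> nat) \<Rightarrow> (nat \<times> mon \<Rightarrow> 'a::field) \<Rightarrow> 'a" where
  "gfun r ds c = (\<Prod>i<r. c (i,(0,0,ds i))) *
     (\<Prod>il\<in>Pairs r. det (syl (ds (fst il)) (ds (snd il)) (abar ds c (fst il)) (abar ds c (snd il))))"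

definition okv :: "nat \<Rightarrow> (nat \<Rightarrow> nat) \<Rightarrow> nat \<times> mon \<Rightarrow> bool" where
  "okv r ds v \<longleftrightarrow> fst v < r \<and> mdeg (snd v) = ds (fst v)"

lemma ppf_coeff_abar:
  assumes "i < r"
  shows "ppf (okv r ds) (\<lambda>c. coeff (abar ds (c :: nat \<times> mon \<Rightarrow> 'a::field) i) k)"
proof (cases "k \<le> ds i")
  case True
  have "ppf (okv r ds) (\<lambda>c :: nat \<times> mon \<Rightarrow> 'a. c (i, (0, ds i - k, k)))"
    by (rule ppf_var) (use assms True in \<open>simp add: okv_def mdeg_def\<close>)
  then show ?thesis using True by (simp add: coeff_abar)
next
  case False then show ?thesis by (simp add: coeff_abar ppf_const)
qed

lemma ppf_gfun: "ppf (okv r ds) (gfun r ds :: (nat \<times> mon \<Rightarrow> 'a::field) \<Rightarrow> 'a)"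
proof -
  have "ppf (okv r ds) (\<lambda>c :: nat \<times> mon \<Rightarrow> 'a. gfun r ds c)"
    unfolding gfun_def
  proof (rule ppf_mult)
    show "ppf (okv r ds) (\<lambda>c :: nat \<times> mon \<Rightarrow> 'a. \<Prod>i<r. c (i, 0, 0, ds i))"
      by (rule ppf_prod, rule ppf_var) (simp add: okv_def mdeg_def)
    show "ppf (okv r ds) (\<lambda>c :: nat \<times> mon \<Rightarrow> 'a. \<Prod>il\<in>Pairs r. det (syl (ds (fst il)) (ds (snd il)) (abar ds c (fst il)) (abar ds c (snd il))))"
    proof (rule ppf_prod)
      fix il assume il: "il \<in> Pairs r"
      obtain i l where il': "il = (i,l)" "i < l" "l < r" using il by (auto simp: Pairs_def)
      show "ppf (okv r ds) (\<lambda>c :: nat \<times> mon \<Rightarrow> 'a. det (syl (ds (fst il)) (ds (snd il)) (abar ds c (fst il)) (abar ds c (snd il))))"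
      proof (rule ppf_det)
        fix c :: "nat \<times> mon \<Rightarrow> 'a"
        show "syl (ds (fst il)) (ds (snd il)) (abar ds c (fst il)) (abar ds c (snd il)) \<in> carrier_mat (ds (fst il) + ds (snd il)) (ds (fst il) + ds (snd il))"
          by (rule syl_carrier)
      next
        fix k s assume ks: "k < ds (fst il) + ds (snd il)" "s < ds (fst il) + ds (snd il)"
        show "ppf (okv r ds) (\<lambda>c :: nat \<times> mon \<Rightarrow> 'a. syl (ds (fst il)) (ds (snd il)) (abar ds c (fst il)) (abar ds c (snd il)) $$ (k, s))"
          using ks il' by (auto simp: syl_def intro!: ppf_if ppf_const ppf_coeff_abar)
      qed
    qed
  qed
  then show ?thesis by simp
qed

lemma gfun_good:
  fixes c :: "nat \<times> mon \<Rightarrow> 'a::field"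
  assumes g: "gfun r ds c \<noteq> 0" and ds1: "\<forall>i<r. ds i \<ge> 1"
  shows "good r ds (forms_of ds c)"
proof -
  have lead: "\<forall>i<r. c (i,(0,0,ds i)) \<noteq> 0" using g by (auto simp: gfun_def)
  have dets: "det (syl (ds i) (ds l) (abar ds c i) (abar ds c l)) \<noteq> 0" if "i < l" "l < r" for i l
  proof -
    have "(i,l) \<in> Pairs r" using that by (simp add: Pairs_def)
    then show ?thesis using g finite_Pairs[of r] by (auto simp: gfun_def)
  qed
  have bez: "\<exists>u v. u * abar ds c i + v * abar ds c l = 1" if "i < l" "l < r" for i l
    by (rule syl_bezout[OF degree_abar degree_abar _ dets[OF that]]) (use ds1 that in auto)
  show ?thesis unfolding good_def
  proof (intro conjI allI impI)
    fix i assume "i < r"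
    then show "phom (forms_of ds c i) (ds i)" by (simp add: phom_forms)
  next
    fix i assume "i < r"
    then show "forms_of ds c i (0, 0, ds i) \<noteq> 0" using lead by (simp add: lead_forms)
  next
    fix i l assume il: "i < r" "l < r" "i \<noteq> l"
    show "\<exists>u v. u * dh (ds i) (pres (forms_of ds c i)) + v * dh (ds l) (pres (forms_of ds c l)) = 1"
    proof (cases "i < l")
      case True then show ?thesis using bez[of i l] il by (simp add: abar_def)
    next
      case False
      then have "l < i" using il by simp
      then obtain u v where "u * abar ds c l + v * abar ds c i = 1" using bez[of l i] il by blast
      then show ?thesis by (intro exI[of _ v] exI[of _ u]) (simp add: abar_def algebra_simps)
    qed
  qed
qed

lemma witness:
  assumes ds1: "\<forall>i<r. ds i \<ge> 1"
  shows "\<exists>c :: nat \<times> mon \<Rightarrow> 'a::alg_closed_field. gfun r ds c \<noteq> 0"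
proof -
  obtain s :: "nat \<Rightarrow> 'a" where s: "inj s" using infinite_countable_subset[OF infinite_alg_closed] by blast
  define c :: "nat \<times> mon \<Rightarrow> 'a" where
    "c = (\<lambda>(i,a,b,k). if a = 0 \<and> b + k = ds i then coeff ([:- s i, 1:] ^ ds i) k else 0)"
  have ab: "abar ds c i = [:- s i, 1:] ^ ds i" for i
  proof (rule poly_eqI)
    fix k show "coeff (abar ds c i) k = coeff ([:- s i, 1:] ^ ds i) k"
    proof (cases "k \<le> ds i")
      case True then show ?thesis by (simp add: coeff_abar c_def)
    next
      case False
      then have "coeff ([:- s i, 1:] ^ ds i) k = 0" by (intro coeff_eq_0) (simp add: degree_linear_power)
      then show ?thesis using False by (simp add: coeff_abar)
    qed
  qed
  have lead: "c (i,(0,0,ds i)) \<noteq> 0" for i by (simp add: c_def coeff_linear_power)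
  have dets: "det (syl (ds i) (ds l) (abar ds c i) (abar ds c l)) \<noteq> 0" if "i < l" for i l
  proof -
    have sil: "s i \<noteq> s l" using s that by (metis inj_eq less_irrefl)
    show ?thesis unfolding ab
    proof (rule syl_det_nz)
      show "degree ([:- s i, 1:] ^ ds i) \<le> ds i" by (simp add: degree_linear_power)
      show "degree ([:- s l, 1:] ^ ds l) \<le> ds l" by (simp add: degree_linear_power)
      show "[:- s i, 1:] ^ ds i \<noteq> 0" by simp
      fix U V :: "'a poly"
      assume "U * [:- s i, 1:] ^ ds i + V * [:- s l, 1:] ^ ds l = 0" "degree V < ds i \<or> V = 0"
      then show "V = 0" using cop_lin[OF sil] by blast
    qed
  qed
  have "gfun r ds c \<noteq> 0"
    unfolding gfun_def using lead dets finite_Pairs[of r]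
    by (auto simp: Pairs_def)
  then show ?thesis by blast
qed

theorem proposition2p1:
  fixes r :: nat and ds :: "nat \<Rightarrow> nat" and d D :: nat
  assumes "r \<ge> 2"
    and "\<forall>i<r. ds i \<ge> 1"
    and "\<forall>i j. i \<le> j \<longrightarrow> j < r \<longrightarrow> ds j \<le> ds i"
    and "d = (\<Sum>i<r. ds i)"
    and "D = (\<Sum>i<r. \<Sum>j\<in>{i<..<r}. ds i * ds j)"
  shows "general_holds r ds (\<lambda>c :: nat \<times> mon \<Rightarrow> 'a::alg_closed_field.
           (\<forall>j. d \<le> j + 2 \<longrightarrow> hilbert_quot (I_F r (forms_of ds c)) j = D) \<and>
           (\<forall>j. j + 1 \<le> d \<longrightarrow>
              int (hilbert_quot (I_F r (forms_of ds c)) j) =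
                int ((j + 2) choose 2)
                - (\<Sum>i<r. int (nat (max (int j - int d + int (ds i)) (-1) + 2) choose 2))))"
proof -
  obtain G :: "(nat \<times> mon, 'a) mpoly" where G: "varsok (okv r ds) G" "\<And>c. mpeval G c = gfun r ds c"
    using ppf_gfun[of r ds] unfolding ppf_def by blast
  obtain c0 :: "nat \<times> mon \<Rightarrow> 'a" where c0: "gfun r ds c0 \<noteq> 0" using witness[OF assms(2)] by blast
  have G0: "G \<noteq> 0"
  proof
    assume "G = 0"
    then have "mpeval G c0 = 0" by simp
    then show False using G(2) c0 by simp
  qed
  have vars: "\<forall>mon_e\<in>Poly_Mapping.keys G. \<forall>v\<in>Poly_Mapping.keys mon_e. fst v < r \<and> mdeg (snd v) = ds (fst v)"
    using G(1) unfolding varsok_def okv_def by blast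
  have H: "(\<forall>j. d \<le> j + 2 \<longrightarrow> hilbert_quot (I_F r (forms_of ds c)) j = D) \<and>
           (\<forall>j. j + 1 \<le> d \<longrightarrow>
              int (hilbert_quot (I_F r (forms_of ds c)) j) =
                int ((j + 2) choose 2)
                - (\<Sum>i<r. int (nat (max (int j - int d + int (ds i)) (-1) + 2) choose 2)))"
    if "mpeval G c \<noteq> 0" for c :: "nat \<times> mon \<Rightarrow> 'a"
  proof -
    have "good r ds (forms_of ds c)" using that G(2) gfun_good assms(2) by metis
    from hilbert_good[OF this assms(1) assms(2) assms(4) assms(5)] show ?thesis .
  qed
  show ?thesis unfolding general_holds_def using G0 vars H by blast
qed


end
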